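(* For all $\varepsilon,\varepsilon'\in(0,1]$ there exists $b_0$ such that for every $b\geq b_0$ there exists $\gamma_0>0$ such that for every $\gamma\in(0,\gamma_0]$ there exists $N_0$ such that for all $n,n'\geq N_0$ the following holds. Let $\Delta:=e^{\gamma\sqrt{\ln n'}}$. Let $G$ be an $(n,\varepsilon)$-digraph and let $G'$ be an induced subdigraph of $G$ on $n'$ vertices, with a perfect fractional matching $\mathbf{x}'$. Suppose $|N^*_{G,G'}(v)|\geq(\frac12+\varepsilon')n'$ for all $v\in V(G)$ and $*\in\{+,-\}$. Let $Q=(q_0,\ldots,q_m)$ be an oriented tree in $G'$ with $(n')^{1/4}+1\leq|Q|\leq3\Delta(n')^{1/4}$ and $\Delta(Q)\leq\Delta$ such that $V(Q)$ is $(G,G')$-well-behaved with respect to $\mathbf{x}'$. Let $n'':=n'-m$ and $\varepsilon'':=\varepsilon'-2(n')^{-\frac34-\frac1{18\sqrt{\ln n'}}}$. Let $u\in V(G)\setminus V(G')$ and $G'':=G[(V(G')\setminus V(Q))\cup\{u\}]$. Then for every $v\in V(G)$ and $*\in\{+,-\}$: (i) $|N^*_{G,G'}(v)\cap V(Q)|=\frac{m+1}{n'}|N^*_{G,G'}(v)|\pm(n')^{\frac14-\frac1{17\sqrt{\ln n'}}}$; (ii) $|N^*_{G,G''}(v)|\geq(\frac12+\varepsilon'')n''$; (iii) $G''$ is an $(n'',\varepsilon'')$-digraph. If moreover $\mathbf{x}'$ is $b$-normal, then additionally (iv) $G''$ has a $(1+(n')^{-\frac34-\frac1{22\sqrt{\ln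 n'}}})b$-normal perfect fractional matching $\mathbf{x}''$ with $h(\mathbf{x}'')\geq\frac{n''}{n'}h(\mathbf{x}')-n''\log\frac{n'}{n''}-(n')^{\frac14-\frac1{24\sqrt{\ln n'}}}$.
   Context: $\log=\log_2$, $\ln$ natural logarithm; $a=\beta\pm c$ means $\beta-c\leq a\leq\beta+c$. Digraphs have no loops and at most one edge from $v$ to $w$ per ordered pair. An $(n,\varepsilon)$-digraph is a digraph on $n$ vertices with every in- and out-degree at least $(\frac12+\varepsilon)n$. $N^*_{G,H}(v)=N^*_G(v)\cap V(H)$. A perfect fractional matching of a digraph $H$ is $\mathbf{x}\colon E(H)\to\mathbb{R}_{\geq0}$ with $\sum_{w\in N^+_H(v)}\mathbf{x}_{vw}=1=\sum_{w\in N^-_H(v)}\mathbf{x}_{wv}$ for all $v$; it is $b$-normal if $\frac1{b|V(H)|}\leq\mathbf{x}_e\leq\frac b{|V(H)|}$ for all $e$; $h(\mathbf{x})=\sum_e\mathbf{x}_e\log\frac1{\mathbf{x}_e}$, $h^+_{\mathbf{x}}(v)=\sum_{w\in N^+_H(v)}\mathbf{x}_{vw}\log\frac1{\mathbf{x}_{vw}}$, $h^-_{\mathbf{x}}(v)$ analogously. $\mathcal{S}_{G,G'}=\{N^*_{G,G'}(v):v\in V(G),*\in\{+,-\}\}$. A set $M\subseteq V(G')$ with $|M|\geq(n')^{1/4}$ is $(G,G')$-well-behaved with respect to $\mathbf{x}'$ if (a) $\big||M\cap S|-\frac{|M|}{n'}|S|\big|<(n')^{\frac14-\frac1{17\sqrt{\ln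 n'}}}$ for all $S\in\mathcal{S}_{G,G'}$, and (b) with $c=(n')^{-\frac34-\frac1{18\sqrt{\ln n'}}}$, for every $v\in V(G')$: $\big|\sum_{w\in N^+_{G'}(v)\cap M}\mathbf{x}'_{vw}-\frac{|M|}{n'}\big|<c$, $\big|\sum_{w\in N^+_{G'}(v)\cap M}\mathbf{x}'_{vw}\log\frac1{\mathbf{x}'_{vw}}-\frac{|M|}{n'}h^+_{\mathbf{x}'}(v)\big|<c$, and the analogous inequalities with in-neighbourhoods, $\mathbf{x}'_{wv}$ and $h^-_{\mathbf{x}'}(v)$ hold. $\Delta(Q)$ is the max degree of the underlying tree. *)

theory Defs
  imports Complex_Main
begin

definition digraph :: "'a set \<Rightarrow> ('a \<times> 'a) set \<Rightarrow> bool" where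
  "digraph V E \<longleftrightarrow> finite V \<and> E \<subseteq> V \<times> V \<and> (\<forall>v. (v, v) \<notin> E)"

definition outN :: "('a \<times> 'a) set \<Rightarrow> 'a \<Rightarrow> 'a set" where
  "outN E v = {w. (v, w) \<in> E}"

definition inN :: "('a \<times> 'a) set \<Rightarrow> 'a \<Rightarrow> 'a set" where
  "inN E v = {w. (w, v) \<in> E}"

definition induced :: "('a \<times> 'a) set \<Rightarrow> 'a set \<Rightarrow> ('a \<times> 'a) set" where
  "induced E S = E \<inter> (S \<times> S)"

definition eps_digraph :: "nat \<Rightarrow> real \<Rightarrow> 'a set \<Rightarrow> ('a \<times> 'a) set \<Rightarrow> bool" where
  "eps_digraph n eps V E \<longleftrightarrow> digraph V E \<and> card V = n \<and>
     (\<forall>v\<in>V. real (card (outN E v)) \<ge> (1/2 + eps) * real n \<and>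
             real (card (inN E v)) \<ge> (1/2 + eps) * real n)"

definition perfect_frac_matching :: "'a set \<Rightarrow> ('a \<times> 'a) set \<Rightarrow> ('a \<times> 'a \<Rightarrow> real) \<Rightarrow> bool" where
  "perfect_frac_matching V E x \<longleftrightarrow> (\<forall>e\<in>E. x e \<ge> 0) \<and>
     (\<forall>v\<in>V. (\<Sum>w\<in>outN E v. x (v, w)) = 1 \<and> (\<Sum>w\<in>inN E v. x (w, v)) = 1)"

definition b_normal :: "real \<Rightarrow> 'a set \<Rightarrow> ('a \<times> 'a) set \<Rightarrow> ('a \<times> 'a \<Rightarrow> real) \<Rightarrow> bool" where
  "b_normal b V E x \<longleftrightarrow>
     (\<forall>e\<in>E. 1 / (b * real (card V)) \<le> x e \<and> x e \<le> b / real (card V))"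

text \<open>Entropy h(x), base-2 logarithm (0 log(1/0) = 0 by Isabelle's conventions).\<close>
definition entropy :: "('a \<times> 'a) set \<Rightarrow> ('a \<times> 'a \<Rightarrow> real) \<Rightarrow> real" where
  "entropy E x = (\<Sum>e\<in>E. x e * log 2 (1 / x e))"

definition hplus :: "('a \<times> 'a) set \<Rightarrow> ('a \<times> 'a \<Rightarrow> real) \<Rightarrow> 'a \<Rightarrow> real" where
  "hplus E x v = (\<Sum>w\<in>outN E v. x (v, w) * log 2 (1 / x (v, w)))"

definition hminus :: "('a \<times> 'a) set \<Rightarrow> ('a \<times> 'a \<Rightarrow> real) \<Rightarrow> 'a \<Rightarrow> real" where
  "hminus E x v = (\<Sum>w\<in>inN E v. x (w, v) * log 2 (1 / x (w, v)))"

definition nbhd_family :: "'a set \<Rightarrow> ('a \<times> 'a) set \<Rightarrow> 'a set \<Rightarrow> 'a set set" where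
  "nbhd_family V E V' = {outN E v \<inter> V' | v. v \<in> V} \<union> {inN E v \<inter> V' | v. v \<in> V}"

definition well_behaved ::
  "'a set \<Rightarrow> ('a \<times> 'a) set \<Rightarrow> 'a set \<Rightarrow> ('a \<times> 'a \<Rightarrow> real) \<Rightarrow> 'a set \<Rightarrow> bool" where
  "well_behaved V E V' x M \<longleftrightarrow>
     (let n' = real (card V'); E' = induced E V';
          c = n' powr (- 3/4 - 1 / (18 * sqrt (ln n'))) in
      M \<subseteq> V' \<and> real (card M) \<ge> n' powr (1/4) \<and>
      (\<forall>S\<in>nbhd_family V E V'.
         \<bar>real (card (M \<inter> S)) - real (card M) / n' * real (card S)\<bar>
           < n' powr (1/4 - 1 / (17 * sqrt (ln n')))) \<and>
      (\<forall>v\<in>V'.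
         \<bar>(\<Sum>w\<in>outN E' v \<inter> M. x (v, w)) - real (card M) / n'\<bar> < c \<and>
         \<bar>(\<Sum>w\<in>outN E' v \<inter> M. x (v, w) * log 2 (1 / x (v, w)))
            - real (card M) / n' * hplus E' x v\<bar> < c \<and>
         \<bar>(\<Sum>w\<in>inN E' v \<inter> M. x (w, v)) - real (card M) / n'\<bar> < c \<and>
         \<bar>(\<Sum>w\<in>inN E' v \<inter> M. x (w, v) * log 2 (1 / x (w, v)))
            - real (card M) / n' * hminus E' x v\<bar> < c))"

text \<open>Oriented tree (VQ,EQ): a loopless digraph without opposite edge pairs whose
  underlying undirected graph is a tree (connected with |V|-1 edges).\<close>
definition oriented_tree :: "'a set \<Rightarrow> ('a \<times> 'a) set \<Rightarrow> bool" where
  "oriented_tree VQ EQ \<longleftrightarrow> digraph VQ EQ \<and> VQ \<noteq> {} \<and>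
     (\<forall>a b. (a, b) \<in> EQ \<longrightarrow> (b, a) \<notin> EQ) \<and>
     (\<forall>a\<in>VQ. \<forall>b\<in>VQ. (a, b) \<in> (EQ \<union> EQ\<inverse>)\<^sup>*) \<and>
     card EQ = card VQ - 1"

definition und_degree :: "('a \<times> 'a) set \<Rightarrow> 'a \<Rightarrow> nat" where
  "und_degree EQ v = card {w. (v, w) \<in> EQ \<or> (w, v) \<in> EQ}"

end

theory Submission
  imports Defs "HOL-Real_Asymp.Real_Asymp"
begin


lemma powr_rw:
  fixes x k a :: real
  assumes "x > 1" "k > 0"
  shows "x powr (a - 1/(k*sqrt(ln x))) = x powr a * exp(-sqrt(ln x)/k)"
proof -
  have l: "ln x > 0" using assms by simp
  have s: "sqrt (ln x) > 0" using l by simp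
  have "1/(k*sqrt(ln x)) * ln x = sqrt(ln x)/k"
    using s assms(2) by (simp add: field_simps)
  hence "x powr (1/(k*sqrt(ln x))) = exp (sqrt(ln x)/k)"
    using assms by (simp add: powr_def)
  thus ?thesis using assms by (simp add: powr_diff exp_minus divide_inverse)
qed

lemma ev_le_of_ratio:
  fixes f g :: "real \<Rightarrow> real"
  assumes "((\<lambda>x. f x / g x) \<longlongrightarrow> 0) at_top" "K > 0" "eventually (\<lambda>x. g x > 0) at_top"
  shows "eventually (\<lambda>x. f x \<le> K * g x) at_top"
proof -
  have "eventually (\<lambda>x. f x / g x < K) at_top" using order_tendstoD(2)[OF assms(1) assms(2)] .
  thus ?thesis using assms(3)
    by eventually_elim (simp add: divide_less_eq mult.commute less_imp_le)
qed

definition cF :: "real \<Rightarrow> real" where "cF x = x powr (-3/4) * exp(-sqrt(ln x)/18)"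
definition dF :: "real \<Rightarrow> real" where "dF x = x powr (-3/4) * exp(-sqrt(ln x)/22)"
definition sF :: "real \<Rightarrow> real" where "sF x = x powr (1/4) * exp(-sqrt(ln x)/24)"
definition eF :: "real \<Rightarrow> real" where "eF x = x powr (1/4) * exp(-sqrt(ln x)/17)"

lemma asymp_conds:
  fixes eps' b :: real
  assumes "eps' > 0" "b > 0"
  shows "eventually (\<lambda>x. 4 \<le> x \<and> (3*exp(sqrt(ln x)/1000) * x powr (1/4))^2 \<le> x \<and>
     cF x \<le> eps'/8 \<and> 0 < cF x \<and> 4 \<le> eps' * x \<and> 16*b*(6/x + 2*cF x) \<le> eps' * dF x \<and>
     0 < dF x \<and> dF x \<le> 1 \<and>
     24 * ln x + 4*x*cF x + 4 + x*dF x*(4 * ln x + 4) \<le> sF x \<and>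
     3/2 + eF x \<le> cF x * x \<and> 2*b \<le> x \<and> b \<le> x \<and> 1 < x) at_top"
proof -
  have pos: "eventually (\<lambda>x::real. x > 0) at_top" by real_asymp
  have e1: "eventually (\<lambda>x::real. 4 \<le> x \<and> 2*b \<le> x \<and> b \<le> x \<and> 1 < x \<and> 4 \<le> eps' * x) at_top"
    using eventually_ge_at_top[of "4 + 2*b + 4/eps'"]
  proof eventually_elim
    case (elim x)
    have "4/eps' \<le> x" using elim assms by auto
    hence "4 \<le> eps' * x" using assms by (simp add: divide_le_eq mult.commute)
    moreover have "0 \<le> 4/eps'" using assms by simp
    ultimately show ?case using elim assms by linarith
  qed
  have e2: "eventually (\<lambda>x::real. (3*exp(sqrt(ln x)/1000) * x powr (1/4))^2 \<le> 1 * x) at_top"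
    by (rule ev_le_of_ratio) (real_asymp, simp, real_asymp)
  have e3: "eventually (\<lambda>x. cF x \<le> eps'/8 \<and> 0 < cF x \<and> 0 < dF x \<and> dF x \<le> 1 \<and> 0 < sF x) at_top"
  proof -
    have "(cF \<longlongrightarrow> 0) at_top" unfolding cF_def by real_asymp
    hence a: "eventually (\<lambda>x. cF x < eps'/8) at_top" using assms by (intro order_tendstoD(2)) auto
    have b: "eventually (\<lambda>x. dF x \<le> 1) at_top"
      unfolding dF_def by real_asymp
    show ?thesis using a b pos by eventually_elim (auto simp: cF_def dF_def sF_def)
  qed
  have e4: "eventually (\<lambda>x. 6/x + 2*cF x \<le> (eps'/(16*b)) * dF x) at_top"
    by (rule ev_le_of_ratio) (unfold cF_def dF_def, real_asymp, use assms in simp, real_asymp)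
  have e5: "eventually (\<lambda>x. 24 * ln x + 4*x*cF x + 4 + x*dF x*(4 * ln x + 4) \<le> 1 * sF x) at_top"
    by (rule ev_le_of_ratio) (unfold cF_def dF_def sF_def, real_asymp, simp, real_asymp)
  have e6: "eventually (\<lambda>x. 3/2 + eF x \<le> 1 * (cF x * x)) at_top"
    by (rule ev_le_of_ratio) (unfold cF_def eF_def, real_asymp, simp, real_asymp)
  show ?thesis using e1 e2 e3 e4 e5 e6
  proof eventually_elim
    case (elim x)
    have "16*b*(6/x + 2*cF x) \<le> 16*b*((eps'/(16*b)) * dF x)"
      using elim assms by (intro mult_left_mono) auto
    also have "\<dots> = eps' * dF x" using assms by simp
    finally show ?case using elim by simp
  qed
qed



lemma outN_induced: "outN (induced E S) v = (if v \<in> S then {w\<in>S. (v,w)\<in>E} else {})"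
  by (auto simp: outN_def induced_def)
lemma inN_induced: "inN (induced E S) v = (if v \<in> S then {w\<in>S. (w,v)\<in>E} else {})"
  by (auto simp: inN_def induced_def)



lemma ln2_ge_half: "ln (2::real) \<ge> 1/2"
proof -
  have "ln (1/2::real) \<le> 1/2 - 1" by (rule ln_le_minus_one) simp
  thus ?thesis by (simp add: ln_div)
qed

lemma phi_pert:
  fixes s t Y K :: real
  assumes "0 < t" "t \<le> 1" "1/K \<le> t" "1 \<le> K" "0 < s" "s \<le> 2*t" "\<bar>s - t\<bar> \<le> Y"
  shows "s * log 2 (1/s) \<ge> t * log 2 (1/t) - Y * (log 2 K + 4)"
proof -
  have l2: "ln (2::real) > 0" by simp
  have split: "s * log 2 (1/s) = s * log 2 (1/t) + s * log 2 (t/s)"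
    using assms by (simp add: log_divide algebra_simps)
  have lnb: "ln (t/s) \<ge> 1 - s/t"
  proof -
    have "ln (s/t) \<le> s/t - 1" using assms by (intro ln_le_minus_one) simp
    thus ?thesis using assms by (simp add: ln_div)
  qed
  have "s * ln (t/s) \<ge> s * (1 - s/t)" using lnb assms by (intro mult_left_mono) auto
  moreover have "s * (1 - s/t) = (s/t) * (t - s)" using assms by (simp add: field_simps)
  moreover have "(s/t) * (t - s) \<ge> - (2 * Y)"
  proof -
    have "s/t \<le> 2" using assms by (simp add: divide_le_eq)
    moreover have "\<bar>(s/t) * (t - s)\<bar> = (s/t) * \<bar>s - t\<bar>" using assms by (simp add: abs_mult)
    moreover have "(s/t) * \<bar>s - t\<bar> \<le> 2 * Y" using assms \<open>s/t \<le> 2\<close>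
      by (intro mult_mono) auto
    ultimately show ?thesis by linarith
  qed
  ultimately have a: "s * ln (t/s) \<ge> - (2*Y)" by linarith
  have Y0: "Y \<ge> 0" using assms(7) by linarith
  have b: "s * log 2 (t/s) \<ge> - (4*Y)"
  proof -
    have "s * log 2 (t/s) = (s * ln (t/s)) / ln 2" by (simp add: log_def)
    also have "\<dots> \<ge> - (2*Y) / ln 2" using a l2 by (intro divide_right_mono) auto
    finally have "s * log 2 (t/s) \<ge> - (2*Y) / ln 2" .
    moreover have "(2*Y) / ln 2 \<le> (2*Y) / (1/2)" using ln2_ge_half Y0 by (intro divide_left_mono) auto
    ultimately show ?thesis by simp
  qed
  have lt0: "log 2 (1/t) \<ge> 0" using assms by simp
  have ltK: "log 2 (1/t) \<le> log 2 K"
  proof -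
    have "1/t \<le> K" using assms by (simp add: divide_le_eq mult.commute)
    thus ?thesis using assms by simp
  qed
  have c: "(s - t) * log 2 (1/t) \<ge> - (Y * log 2 K)"
  proof -
    have "\<bar>(s - t) * log 2 (1/t)\<bar> = \<bar>s - t\<bar> * log 2 (1/t)" using lt0 by (simp add: abs_mult)
    also have "\<dots> \<le> Y * log 2 K" using assms lt0 ltK Y0 by (intro mult_mono) auto
    finally show ?thesis by linarith
  qed
  have "s * log 2 (1/s) = t * log 2 (1/t) + (s - t) * log 2 (1/t) + s * log 2 (t/s)"
    using split by (simp add: algebra_simps)
  thus ?thesis using b c by (simp add: algebra_simps)
qed

lemma sum_out_pairs:
  assumes "finite V" "E \<subseteq> V \<times> V"
  shows "(\<Sum>v\<in>V. \<Sum>w\<in>outN E v \<inter> P. g (v,w)) = (\<Sum>e\<in>{e\<in>E. snd e \<in> P}. g e)"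
proof -
  have fin: "finite (outN E v \<inter> P)" for v
  proof -
    have "outN E v \<subseteq> V" using assms unfolding outN_def by auto
    thus ?thesis using assms finite_subset by blast
  qed
  have "(\<Sum>v\<in>V. \<Sum>w\<in>outN E v \<inter> P. g (v,w)) = (\<Sum>e\<in>Sigma V (\<lambda>v. outN E v \<inter> P). g e)"
    using sum.Sigma[OF assms(1), of "\<lambda>v. outN E v \<inter> P" "\<lambda>v w. g (v,w)"] fin by simp
  also have "Sigma V (\<lambda>v. outN E v \<inter> P) = {e\<in>E. snd e \<in> P}" using assms unfolding outN_def by auto
  finally show ?thesis .
qed

lemma sum_in_pairs:
  assumes "finite V" "E \<subseteq> V \<times> V"
  shows "(\<Sum>w\<in>V. \<Sum>v\<in>inN E w \<inter> P. g (v,w)) = (\<Sum>e\<in>{e\<in>E. fst e \<in> P}. g e)"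
proof -
  have fin: "finite (inN E w \<inter> P)" for w
  proof -
    have "inN E w \<subseteq> V" using assms unfolding inN_def by auto
    thus ?thesis using assms finite_subset by blast
  qed
  have "(\<Sum>w\<in>V. \<Sum>v\<in>inN E w \<inter> P. g (v,w)) = (\<Sum>p\<in>Sigma V (\<lambda>w. inN E w \<inter> P). g (snd p, fst p))"
    using sum.Sigma[OF assms(1), of "\<lambda>w. inN E w \<inter> P" "\<lambda>w v. g (v,w)"] fin
    by (simp add: case_prod_beta)
  also have "\<dots> = (\<Sum>e\<in>(\<lambda>p. (snd p, fst p)) ` Sigma V (\<lambda>w. inN E w \<inter> P). g e)"
    by (subst sum.reindex) (auto simp: inj_on_def)
  also have "(\<lambda>p. (snd p, fst p)) ` Sigma V (\<lambda>w. inN E w \<inter> P) = {e\<in>E. fst e \<in> P}"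
    using assms unfolding inN_def by force
  finally show ?thesis .
qed



lemma final_arith:
  fixes H \<alpha> n N m c \<delta> S K1 T P ent la :: real
  assumes a: "\<alpha> = n/N" and Nd: "N = n - m" and m0: "0 \<le> m" and msq: "m^2 \<le> n" and Nh: "N \<ge> n/2" and npos: "n > 0"
    and H0: "0 \<le> H" and Hu: "H \<le> n * K1" and K0: "K1 \<ge> 0"
    and P: "P \<ge> H - 2*(m+1)/n*H - 2*n*c"
    and T0: "0 \<le> T" and T1: "T \<le> N - 1" and la0: "0 \<le> la" and la1: "la \<le> 2*m/N"
    and ent: "ent \<ge> \<alpha>*P - \<alpha>*la*T - n*\<delta>*(K1+4)"
    and hS: "6*K1 + 4*n*c + 4 + n*\<delta>*(K1+4) \<le> S" and cpos: "c > 0"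
  shows "ent \<ge> N/n*H - N*la - S"
proof -
  have Npos: "N > 0" using Nh npos by linarith
  have a2: "\<alpha> \<le> 2" using a Nh Npos npos by (simp add: divide_le_eq)
  have a0: "\<alpha> > 0" using a Npos npos by simp
  have iden: "\<alpha>*(1 - 2*(m+1)/n) = N/n - (2*n + m^2)/(n*N)"
  proof -
    have nm: "n - m > 0" using Npos Nd by simp
    show ?thesis unfolding a Nd using npos nm
      by (simp add: field_simps power2_eq_square)
  qed
  have c1: "\<alpha>*P \<ge> \<alpha>*(1 - 2*(m+1)/n)*H - 2*\<alpha>*n*c"
  proof -
    have "\<alpha>*P \<ge> \<alpha>*(H - 2*(m+1)/n*H - 2*n*c)" using P a0 by (intro mult_left_mono) auto
    thus ?thesis by (simp add: algebra_simps)
  qed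
  have c2: "(2*n + m^2)/(n*N) * H \<le> 6 * K1"
  proof -
    have "(2*n + m^2)/(n*N) * H \<le> (2*n + m^2)/(n*N) * (n*K1)"
      using Hu npos Npos m0 by (intro mult_left_mono) auto
    also have "\<dots> = (2*n + m^2)/N * K1" using npos Npos by (simp add: field_simps)
    also have "\<dots> \<le> 6 * K1"
    proof -
      have "(2*n + m^2) \<le> 6 * N" using msq Nh by linarith
      hence "(2*n + m^2)/N \<le> 6" using Npos by (simp add: divide_le_eq)
      thus ?thesis using K0 by (intro mult_right_mono) auto
    qed
    finally show ?thesis .
  qed
  have c3: "2*\<alpha>*n*c \<le> 4*n*c" using a2 npos cpos by (simp add: mult_right_mono)
  have c4: "\<alpha>*la*T \<le> N*la + 4"
  proof -
    have s1: "\<alpha>*la*T \<le> \<alpha>*la*(N-1)" using T1 a0 la0 by (intro mult_left_mono) auto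
    have s2: "\<alpha>*la*(N-1) = (n - \<alpha>)*la" using a Npos by (simp add: field_simps)
    have s3: "(n - \<alpha>)*la \<le> n * la" using a0 la0 by (simp add: mult_right_mono)
    have s4: "n * la = N*la + m*la" unfolding Nd by (simp add: algebra_simps)
    have s5: "m*la \<le> m*(2*m/N)" using la1 m0 by (intro mult_left_mono)
    have "m*(2*m/N) = 2*m^2/N" by (simp add: power2_eq_square)
    also have "\<dots> \<le> 2*n/(n/2)" using msq Nh npos m0 by (intro frac_le) auto
    also have "\<dots> = 4" using npos by simp
    finally have s6: "m*(2*m/N) \<le> 4" .
    show ?thesis using s1 s2 s3 s4 s5 s6 by linarith
  qed
  have "ent \<ge> (N/n - (2*n + m^2)/(n*N))*H - 2*\<alpha>*n*c - \<alpha>*la*T - n*\<delta>*(K1+4)"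
  proof -
    have "(N/n - (2*n + m^2)/(n*N))*H = \<alpha>*(1 - 2*(m+1)/n)*H" by (simp only: iden)
    thus ?thesis using ent c1 by linarith
  qed
  moreover have "(N/n - (2*n + m^2)/(n*N))*H = N/n*H - (2*n + m^2)/(n*N)*H" by (simp add: algebra_simps)
  ultimately show ?thesis using c2 c3 c4 hS by linarith
qed

lemma gen_ident: "(a::real)*(1-t) - a*(1-k) = -a*(t-k)" by (simp add: algebra_simps)

lemma normal_num:
  fixes t s \<delta> b N :: real
  assumes "0<\<delta>" "\<delta>\<le>1" "2\<le>b" "0<N" "1/(b*N) \<le> t" "t \<le> b/N" "\<bar>s-t\<bar> \<le> \<delta>/(2*b*N)"
  shows "1/((1+\<delta>)*b*N) \<le> s \<and> s \<le> (1+\<delta>)*b/N"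
proof
  have bN: "b*N > 0" using assms by simp
  have "\<delta>/(2*b*N) \<le> \<delta>*b/N"
  proof -
    have "\<delta>/(2*b*N) = (\<delta>/N) * (1/(2*b))" by (simp add: field_simps)
    also have "\<dots> \<le> (\<delta>/N) * b"
    proof -
      have "1/(2*b) \<le> 1" using assms by simp
      hence "1/(2*b) \<le> b" using assms by linarith
      thus ?thesis using assms by (intro mult_left_mono) auto
    qed
    finally show ?thesis by simp
  qed
  moreover have "s \<le> t + \<delta>/(2*b*N)" using assms(7) by (simp add: abs_le_iff)
  moreover have "(1+\<delta>)*b/N = b/N + \<delta>*b/N" by (simp add: add_divide_distrib distrib_right)
  ultimately show "s \<le> (1+\<delta>)*b/N" using assms(6) by linarith
  have "1/((1+\<delta>)*b*N) \<le> (1 - \<delta>/2)/(b*N)"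
  proof -
    have "1 \<le> (1 - \<delta>/2) * (1+\<delta>)" using assms by (simp add: algebra_simps power2_eq_square; smt (verit) mult_left_le_one_le)
    hence "1/(1+\<delta>) \<le> 1 - \<delta>/2" using assms by (simp add: divide_le_eq mult.commute)
    hence "(1/(b*N)) * (1/(1+\<delta>)) \<le> (1/(b*N)) * (1 - \<delta>/2)" using bN by (intro mult_left_mono) auto
    thus ?thesis by (simp add: mult.commute mult.left_commute)
  qed
  also have "(1 - \<delta>/2)/(b*N) = 1/(b*N) - \<delta>/(2*b*N)" using bN by (simp add: diff_divide_distrib)
  also have "\<dots> \<le> s" using assms by (simp add: abs_le_iff)
  finally show "1/((1+\<delta>)*b*N) \<le> s" .
qed

lemma normal_num2:
  fixes a b N :: real
  assumes "2\<le>b" "0<N" "N/2 \<le> a" "a \<le> N"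
  shows "1/(b*N) \<le> 1/a \<and> 1/a \<le> b/N"
proof
  have a: "a > 0" using assms by simp
  show "1/(b*N) \<le> 1/a" using assms a by (intro divide_left_mono) (auto simp: mult_le_cancel_right1 intro: order_trans[of _ N])
  have "1/a \<le> 1/(N/2)" using assms a by (intro divide_left_mono) auto
  also have "\<dots> = 2/N" by simp
  also have "\<dots> \<le> b/N" using assms by (simp add: divide_right_mono)
  finally show "1/a \<le> b/N" .
qed

lemma part4:
  fixes V V' VQ :: "'a set" and E :: "('a\<times>'a) set" and x' :: "'a\<times>'a \<Rightarrow> real" and u :: 'a
    and n' m :: nat and b eps' c \<delta> S :: real
  assumes dig: "digraph V E"
    and V'V: "V' \<subseteq> V" and cardV': "card V' = n'"
    and pfm: "perfect_frac_matching V' (induced E V') x'"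
    and bn: "b_normal b V' (induced E V') x'"
    and VQ: "VQ \<subseteq> V'" and cardVQ: "card VQ = m + 1"
    and u: "u \<in> V - V'"
    and wb: "\<forall>v\<in>V'.
         \<bar>(\<Sum>w\<in>outN (induced E V') v \<inter> VQ. x' (v, w)) - real (m+1) / real n'\<bar> < c \<and>
         \<bar>(\<Sum>w\<in>outN (induced E V') v \<inter> VQ. x' (v, w) * log 2 (1 / x' (v, w)))
            - real (m+1) / real n' * hplus (induced E V') x' v\<bar> < c \<and>
         \<bar>(\<Sum>w\<in>inN (induced E V') v \<inter> VQ. x' (w, v)) - real (m+1) / real n'\<bar> < c \<and>
         \<bar>(\<Sum>w\<in>inN (induced E V') v \<inter> VQ. x' (w, v) * log 2 (1 / x' (w, v)))
            - real (m+1) / real n' * hminus (induced E V') x' v\<bar> < c"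
    and deg: "\<forall>v\<in>V. real (card (outN E v \<inter> ((V' - VQ) \<union> {u}))) \<ge> (1/2 + (eps' - 2*c)) * real (n' - m) \<and>
                    real (card (inN E v \<inter> ((V' - VQ) \<union> {u}))) \<ge> (1/2 + (eps' - 2*c)) * real (n' - m)"
    and n4: "4 \<le> real n'" and msq: "real m ^ 2 \<le> real n'"
    and c8: "c \<le> eps'/8" and cpos: "0 < c" and epsN: "4 \<le> eps' * real n'"
    and hD: "16*b*(6/real n' + 2*c) \<le> eps' * \<delta>" and dpos: "0 < \<delta>" and d1: "\<delta> \<le> 1"
    and hS: "6*log 2 (b*real n') + 4*real n'*c + 4 + real n'*\<delta>*(log 2 (b*real n')+4) \<le> S"
    and b2: "2 \<le> b" and bn': "2*b \<le> real n'" and eps1: "eps' \<le> 1" and epspos: "0 < eps'"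
  shows "\<exists>x''. perfect_frac_matching ((V' - VQ) \<union> {u}) (induced E ((V' - VQ) \<union> {u})) x'' \<and>
           b_normal ((1 + \<delta>) * b) ((V' - VQ) \<union> {u}) (induced E ((V' - VQ) \<union> {u})) x'' \<and>
           entropy (induced E ((V' - VQ) \<union> {u})) x'' \<ge> real (n' - m) / real n' * entropy (induced E V') x'
              - real (n' - m) * log 2 (real n' / real (n' - m)) - S"
proof -
  define W where "W = V' - VQ"
  define V'' where "V'' = W \<union> {u}"
  define E' where "E' = induced E V'"
  define E'' where "E'' = induced E V''"
  define N where "N = n' - m"
  define \<alpha> where "\<alpha> = real n' / real N"
  define Out where "Out v = {w\<in>W. (v,w)\<in>E}" for v
  define Inn where "Inn w = {v\<in>W. (v,w)\<in>E}" for w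
  define A where "A = {w\<in>W. (u,w)\<in>E}"
  define B where "B = {w\<in>W. (w,u)\<in>E}"
  define C where "C a a' = Inn a \<inter> Inn a'" for a a'
  define \<rho> where "\<rho> v = \<alpha> * (\<Sum>w\<in>Out v. x'(v,w)) + (if v\<in>B then 1/card B else 0) - 1" for v
  define f where "f w = \<alpha> * (\<Sum>v\<in>Inn w. x'(v,w)) + (if w\<in>A then 1/card A else 0) - (\<Sum>v\<in>Inn w. \<rho> v / card (Out v)) - 1" for w
  define y2 where "y2 v w = (\<Sum>a'\<in>W. if v \<in> C w a' then - f w / (real (card W) * real (card (C w a'))) else 0)
      + (\<Sum>a\<in>W. if v \<in> C a w then f a / (real (card W) * real (card (C a w))) else 0)" for v w
  define x'' where "x'' = (\<lambda>(v,w). if v = u then (if w\<in>A then 1/card A else 0) else if w = u then (if v \<in> B then 1/card B else 0)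
      else \<alpha> * x'(v,w) - \<rho> v / card (Out v) + y2 v w)"
  define e'' where "e'' = eps' - 2*c"
  define R where "R = 3/real N + 2*c"
  have finV: "finite V" using dig by (simp add: digraph_def)
  have finV': "finite V'" using finV V'V finite_subset by blast
  have finW: "finite W" unfolding W_def using finV' by simp
  have uW: "u \<notin> W" using u unfolding W_def by auto
  have uV: "u \<in> V" using u by simp
  have noloop: "(v,v) \<notin> E" for v using dig by (simp add: digraph_def)
  have finVQ: "finite VQ" using finV' VQ finite_subset by blast
  have cardW: "card W = n' - (m+1)" unfolding W_def using card_Diff_subset[OF finVQ VQ] cardV' cardVQ by simp
  have mle: "m + 1 \<le> n'" using card_mono[OF finV' VQ] cardV' cardVQ by simp
  have realN: "real N = real n' - real m" unfolding N_def using mle by simp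
  have cardW': "real (card W) = real N - 1" using cardW mle realN by simp
  have cardV'': "card V'' = N" unfolding V''_def using cardW uW finW mle N_def by simp
  have mhalf: "real m \<le> real n' / 2"
  proof -
    have "real m \<le> sqrt (real n')" using msq real_le_rsqrt by blast
    also have "sqrt (real n') \<le> real n' / 2"
    proof -
      have "sqrt (real n') * sqrt (real n') = real n'" by simp
      moreover have "2 \<le> sqrt (real n')" using n4 real_le_rsqrt[of 2 "real n'"] by simp
      moreover have "sqrt (real n') * 2 \<le> sqrt (real n') * sqrt (real n')"
        using \<open>2 \<le> sqrt (real n')\<close> by (intro mult_left_mono) auto
      ultimately show ?thesis by linarith
    qed
    finally show ?thesis .
  qed
  have Nge: "real N \<ge> real n' / 2" using realN mhalf by simp
  have Npos: "real N > 0" using Nge n4 by simp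
  have e''ge: "e'' \<ge> 3/4 * eps'" unfolding e''_def using c8 by simp
  have epsNN: "eps' * real N \<ge> 2" proof -
    have "eps' * real N \<ge> eps' * (real n' / 2)" using Nge epspos by (intro mult_left_mono) auto
    thus ?thesis using epsN by simp
  qed
  have e''N: "e'' * real N \<ge> 3/2" proof -
    have "e'' * real N \<ge> (3/4 * eps') * real N" using e''ge Npos by (intro mult_right_mono) auto
    thus ?thesis using epsNN by simp
  qed
  have WV': "W \<subseteq> V'" unfolding W_def by auto
  have WV: "W \<subseteq> V" using WV' V'V by auto
  have V''V: "V'' \<subseteq> V" unfolding V''_def using WV uV by auto
  have outW: "outN E'' v = Out v \<union> (if v\<in>B then {u} else {})" if "v \<in> W" for v
    using that unfolding E''_def outN_induced V''_def Out_def B_def by auto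
  have outu: "outN E'' u = A"
    unfolding E''_def outN_induced V''_def A_def using noloop by auto
  have inW: "inN E'' w = Inn w \<union> (if w\<in>A then {u} else {})" if "w \<in> W" for w
    using that unfolding E''_def inN_induced V''_def Inn_def A_def by auto
  have inu: "inN E'' u = B"
    unfolding E''_def inN_induced V''_def B_def using noloop by auto
  have finOut: "finite (Out v)" for v unfolding Out_def using finW by simp
  have finInn: "finite (Inn v)" for v unfolding Inn_def using finW by simp
  have OutW: "Out v \<subseteq> W" for v unfolding Out_def by auto
  have InnW: "Inn v \<subseteq> W" for v unfolding Inn_def by auto
  have degs: "real (card (outN E v \<inter> V'')) \<ge> (1/2 + e'') * real N \<and> real (card (inN E v \<inter> V'')) \<ge> (1/2 + e'') * real N"
    if "v \<in> V" for v using deg that unfolding V''_def W_def e''_def N_def by blast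
  have Outge: "real (card (Out v)) \<ge> (1/2 + e'') * real N - 1" if "v \<in> V" for v
  proof -
    have "outN E v \<inter> V'' \<subseteq> insert u (Out v)" unfolding outN_def V''_def Out_def by auto
    hence "card (outN E v \<inter> V'') \<le> card (insert u (Out v))" using finOut by (intro card_mono) auto
    also have "\<dots> \<le> card (Out v) + 1" using finOut by (simp add: card_insert_if)
    finally show ?thesis using degs[OF that] by linarith
  qed
  have Innge: "real (card (Inn v)) \<ge> (1/2 + e'') * real N - 1" if "v \<in> V" for v
  proof -
    have "inN E v \<inter> V'' \<subseteq> insert u (Inn v)" unfolding inN_def V''_def Inn_def by auto
    hence "card (inN E v \<inter> V'') \<le> card (insert u (Inn v))" using finInn by (intro card_mono) auto
    also have "\<dots> \<le> card (Inn v) + 1" using finInn by (simp add: card_insert_if)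
    finally show ?thesis using degs[OF that] by linarith
  qed
  have halfN: "(1/2 + e'') * real N - 1 \<ge> real N / 2" using e''N by (simp add: algebra_simps)
  have Outhalf: "real (card (Out v)) \<ge> real N / 2" if "v \<in> V" for v using Outge[OF that] halfN by linarith
  have Outpos: "card (Out v) > 0" if "v \<in> V" for v using Outhalf[OF that] Npos by linarith
  have Aeq: "outN E u \<inter> V'' = A" unfolding outN_def V''_def A_def using noloop by auto
  have Beq: "inN E u \<inter> V'' = B" unfolding inN_def V''_def B_def using noloop by auto
  have Age: "real (card A) \<ge> real N / 2" using degs[OF uV] Aeq halfN by (smt (verit))
  have Bge: "real (card B) \<ge> real N / 2" using degs[OF uV] Beq halfN by (smt (verit))
  have finA: "finite A" and finB: "finite B" unfolding A_def B_def using finW by auto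
  have AW: "A \<subseteq> W" and BW: "B \<subseteq> W" unfolding A_def B_def by auto
  have Apos: "card A > 0" using Age Npos by linarith
  have Bpos: "card B > 0" using Bge Npos by linarith
  have Cge: "real (card (C a a')) \<ge> eps' * real N" if "a \<in> W" "a' \<in> W" for a a'
  proof -
    have aV: "a \<in> V" "a' \<in> V" using that WV by auto
    have "card (Inn a \<union> Inn a') \<le> card W" using finW InnW by (intro card_mono) auto
    moreover have "card (Inn a \<union> Inn a') + card (Inn a \<inter> Inn a') = card (Inn a) + card (Inn a')"
      using card_Un_Int[OF finInn finInn] by simp
    ultimately have "real (card (C a a')) \<ge> real (card (Inn a)) + real (card (Inn a')) - real (card W)"
      unfolding C_def by linarith
    moreover have "real (card (Inn a)) + real (card (Inn a')) - real (card W) \<ge> 2 * e'' * real N - 1"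
      using Innge[OF aV(1)] Innge[OF aV(2)] cardW' by (simp add: algebra_simps)
    moreover have "2 * e'' * real N - 1 \<ge> eps' * real N"
    proof -
      have "2 * e'' * real N \<ge> 2 * (3/4*eps') * real N" using e''ge Npos by (intro mult_right_mono) auto
      thus ?thesis using epsNN by simp
    qed
    ultimately show ?thesis by linarith
  qed
  have Cpos: "card (C a a') > 0" if "a \<in> W" "a' \<in> W" for a a'
  proof -
    have "eps' * real N > 0" using epspos Npos by simp
    thus ?thesis using Cge[OF that] by linarith
  qed
  have finC: "finite (C a a')" for a a' unfolding C_def using finInn by simp
  have CInn: "C a a' \<subseteq> Inn a" "C a a' \<subseteq> Inn a'" for a a' unfolding C_def by auto
  have Wpos: "card W > 0" using cardW' Nge n4 by simp
  have outE': "outN E' v = {w\<in>V'. (v,w)\<in>E}" if "v \<in> V'" for v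
    using that unfolding E'_def outN_induced by simp
  have inE': "inN E' v = {w\<in>V'. (w,v)\<in>E}" if "v \<in> V'" for v
    using that unfolding E'_def inN_induced by simp
  have rows: "(\<Sum>w\<in>outN E' v. x' (v, w)) = 1" "(\<Sum>w\<in>inN E' v. x' (w, v)) = 1" if "v \<in> V'" for v
    using pfm that unfolding perfect_frac_matching_def E'_def by auto
  have xbnd: "1 / (b * real n') \<le> x' e \<and> x' e \<le> b / real n'" if "e \<in> E'" for e
    using bn that cardV' unfolding b_normal_def E'_def by auto
  have E'mem: "((v,w) \<in> E') = ((v,w) \<in> E \<and> v \<in> V' \<and> w \<in> V')" for v w
    unfolding E'_def induced_def by auto
  have npos: "real n' > 0" using n4 by simp
  have xpos: "x' e > 0" if "e \<in> E'" for e
  proof -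
    have "1 / (b * real n') > 0" using b2 npos by simp
    thus ?thesis using xbnd[OF that] by linarith
  qed
  define q where "q v = (\<Sum>w\<in>outN E' v \<inter> VQ. x' (v, w))" for v
  define q' where "q' w = (\<Sum>v\<in>inN E' w \<inter> VQ. x' (v, w))" for w
  have qb: "\<bar>q v - real (m+1) / real n'\<bar> < c" "\<bar>q' v - real (m+1) / real n'\<bar> < c" if "v \<in> V'" for v
    using wb that unfolding q_def q'_def E'_def by auto
  have sumOut: "(\<Sum>w\<in>Out v. x'(v,w)) = 1 - q v" if "v \<in> W" for v
  proof -
    have vV': "v \<in> V'" using that WV' by auto
    have "outN E' v = Out v \<union> (outN E' v \<inter> VQ)" using outE'[OF vV'] unfolding Out_def W_def by auto
    moreover have "Out v \<inter> (outN E' v \<inter> VQ) = {}" unfolding Out_def W_def by auto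
    moreover have "finite (outN E' v)" using outE'[OF vV'] finV' by simp
    ultimately have "(\<Sum>w\<in>outN E' v. x' (v, w)) = (\<Sum>w\<in>Out v. x'(v,w)) + q v"
      unfolding q_def by (metis finOut finite_Int sum.union_disjoint)
    thus ?thesis using rows(1)[OF vV'] by simp
  qed
  have sumInn: "(\<Sum>v\<in>Inn w. x'(v,w)) = 1 - q' w" if "w \<in> W" for w
  proof -
    have vV': "w \<in> V'" using that WV' by auto
    have "inN E' w = Inn w \<union> (inN E' w \<inter> VQ)" using inE'[OF vV'] unfolding Inn_def W_def by auto
    moreover have "Inn w \<inter> (inN E' w \<inter> VQ) = {}" unfolding Inn_def W_def by auto
    moreover have "finite (inN E' w)" using inE'[OF vV'] finV' by simp
    ultimately have "(\<Sum>v\<in>inN E' w. x' (v, w)) = (\<Sum>v\<in>Inn w. x'(v,w)) + q' w"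
      unfolding q'_def by (metis finInn finite_Int sum.union_disjoint)
    thus ?thesis using rows(2)[OF vV'] by simp
  qed
  have alpha1: "\<alpha> * (1 - real (m+1) / real n') = 1 - 1 / real N"
  proof -
    have "1 - real (m+1) / real n' = (real N - 1) / real n'" using realN npos by (simp add: field_simps)
    hence "\<alpha> * (1 - real (m+1) / real n') = (real N - 1) / real N" unfolding \<alpha>_def using npos by simp
    thus ?thesis using Npos by (simp add: field_simps)
  qed
  have alpha_le2: "\<alpha> \<le> 2" unfolding \<alpha>_def using Nge Npos by (simp add: divide_le_eq)
  have alpha_ge1: "\<alpha> \<ge> 1" unfolding \<alpha>_def using realN Npos by (simp add: le_divide_eq)
  have Rpos: "R > 0" unfolding R_def using Npos cpos by (simp add: add_pos_pos)
  have fracB: "0 \<le> (if v\<in>B then 1/real (card B) else 0) \<and> (if v\<in>B then 1/real (card B) else 0) \<le> 2 / real N" for v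
    using Bge Npos by (auto simp: field_simps)
  have fracA: "0 \<le> (if v\<in>A then 1/real (card A) else 0) \<and> (if v\<in>A then 1/real (card A) else 0) \<le> 2 / real N" for v
    using Age Npos by (auto simp: field_simps)
  have aq: "\<bar>\<alpha> * (1 - t) - (1 - 1/real N)\<bar> \<le> 2 * c" if "\<bar>t - real (m+1) / real n'\<bar> < c" for t
  proof -
    have "\<alpha> * (1 - t) - (1 - 1/real N) = \<alpha> * (1 - t) - \<alpha> * (1 - real (m+1) / real n')"
      using alpha1 by simp
    also have "\<dots> = - \<alpha> * (t - real (m+1) / real n')"
      using gen_ident[of \<alpha> t "real (m+1) / real n'"] .
    finally have "\<alpha> * (1 - t) - (1 - 1/real N) = - \<alpha> * (t - real (m+1) / real n')" .
    hence "\<bar>\<alpha> * (1 - t) - (1 - 1/real N)\<bar> = \<alpha> * \<bar>t - real (m+1) / real n'\<bar>"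
      using alpha_ge1 by (simp add: abs_mult)
    also have "\<dots> \<le> 2 * c" using that alpha_le2 alpha_ge1
      by (meson less_imp_le mult_mono' abs_ge_zero order_trans zero_le_one)
    finally show ?thesis .
  qed
  have rhob: "\<bar>\<rho> v\<bar> \<le> R" if "v \<in> W" for v
  proof -
    have "\<bar>\<alpha> * (1 - q v) - (1 - 1/real N)\<bar> \<le> 2 * c" using aq qb(1) that WV' by blast
    thus ?thesis unfolding \<rho>_def R_def sumOut[OF that] using fracB[of v] Npos
      by (simp add: abs_le_iff; smt (verit) divide_nonneg_nonneg of_nat_0_le_iff)
  qed
  have rhoO: "\<bar>\<rho> v / real (card (Out v))\<bar> \<le> 2 * R / real N" if "v \<in> W" for v
  proof -
    have vV: "v \<in> V" using that WV by auto
    have "\<bar>\<rho> v / real (card (Out v))\<bar> = \<bar>\<rho> v\<bar> / real (card (Out v))" by (simp add: abs_div_pos)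
    also have "\<dots> \<le> R / (real N / 2)"
      using rhob[OF that] Outhalf[OF vV] Npos Rpos by (intro frac_le) auto
    also have "\<dots> = 2 * R / real N" by simp
    finally show ?thesis .
  qed
  have fb: "\<bar>f w\<bar> \<le> 3 * R" if "w \<in> W" for w
  proof -
    have a: "\<bar>\<alpha> * (1 - q' w) - (1 - 1/real N)\<bar> \<le> 2 * c" using aq qb(2) that WV' by blast
    have "\<bar>\<Sum>v\<in>Inn w. \<rho> v / real (card (Out v))\<bar> \<le> (\<Sum>v\<in>Inn w. \<bar>\<rho> v / real (card (Out v))\<bar>)"
      by (rule sum_abs)
    also have "\<dots> \<le> (\<Sum>v\<in>Inn w. 2 * R / real N)" using rhoO InnW by (intro sum_mono) auto
    also have "\<dots> = real (card (Inn w)) * (2 * R / real N)" by simp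
    also have "\<dots> \<le> real N * (2 * R / real N)"
    proof -
      have "card (Inn w) \<le> card W" using finW InnW by (intro card_mono) auto
      hence "real (card (Inn w)) \<le> real N" using cardW' by linarith
      thus ?thesis using Rpos Npos by (intro mult_right_mono) auto
    qed
    also have "\<dots> = 2 * R" using Npos by simp
    finally have b: "\<bar>\<Sum>v\<in>Inn w. \<rho> v / real (card (Out v))\<bar> \<le> 2 * R" .
    show ?thesis unfolding f_def sumInn[OF that] using a b fracA[of w] Npos unfolding R_def
      by (simp add: abs_le_iff; smt (verit) divide_nonneg_nonneg of_nat_0_le_iff)
  qed
  have y2b: "\<bar>y2 v w\<bar> \<le> 6 * R / (eps' * real N)" if "w \<in> W" for v w
  proof -
    have tb: "\<bar>g / (real (card W) * real (card (C a a')))\<bar> \<le> 3 * R / (eps' * real N) / real (card W)"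
      if "\<bar>g\<bar> \<le> 3 * R" "a \<in> W" "a' \<in> W" for g a a'
    proof -
      have "\<bar>g / (real (card W) * real (card (C a a')))\<bar> = \<bar>g\<bar> / real (card (C a a')) / real (card W)"
        by (simp add: abs_div_pos field_simps)
      also have "\<dots> \<le> 3 * R / (eps' * real N) / real (card W)"
        using that Cge[OF that(2,3)] Wpos epspos Npos Rpos
        by (intro divide_right_mono frac_le) auto
      finally show ?thesis .
    qed
    have s1: "\<bar>\<Sum>a'\<in>W. if v \<in> C w a' then - f w / (real (card W) * real (card (C w a'))) else 0\<bar> \<le> 3 * R / (eps' * real N)"
    proof -
      have "\<bar>\<Sum>a'\<in>W. if v \<in> C w a' then - f w / (real (card W) * real (card (C w a'))) else 0\<bar>
          \<le> (\<Sum>a'\<in>W. \<bar>if v \<in> C w a' then - f w / (real (card W) * real (card (C w a'))) else 0\<bar>)" by (rule sum_abs)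
      also have "\<dots> \<le> (\<Sum>a'\<in>W. 3 * R / (eps' * real N) / real (card W))"
      proof (rule sum_mono)
        fix a' assume a': "a' \<in> W"
        have "0 \<le> 3 * R / (eps' * real N) / real (card W)" using Rpos epspos Npos by simp
        moreover have "\<bar>- f w\<bar> \<le> 3 * R" using fb[OF that] by simp
        ultimately show "\<bar>if v \<in> C w a' then - f w / (real (card W) * real (card (C w a'))) else 0\<bar> \<le> 3 * R / (eps' * real N) / real (card W)"
          using tb[of "- f w" w a'] that a' by auto
      qed
      also have "\<dots> = 3 * R / (eps' * real N)" using Wpos by simp
      finally show ?thesis .
    qed
    have s2: "\<bar>\<Sum>a\<in>W. if v \<in> C a w then f a / (real (card W) * real (card (C a w))) else 0\<bar> \<le> 3 * R / (eps' * real N)"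
    proof -
      have "\<bar>\<Sum>a\<in>W. if v \<in> C a w then f a / (real (card W) * real (card (C a w))) else 0\<bar>
          \<le> (\<Sum>a\<in>W. \<bar>if v \<in> C a w then f a / (real (card W) * real (card (C a w))) else 0\<bar>)" by (rule sum_abs)
      also have "\<dots> \<le> (\<Sum>a\<in>W. 3 * R / (eps' * real N) / real (card W))"
      proof (rule sum_mono)
        fix a assume a: "a \<in> W"
        have "0 \<le> 3 * R / (eps' * real N) / real (card W)" using Rpos epspos Npos by simp
        then show "\<bar>if v \<in> C a w then f a / (real (card W) * real (card (C a w))) else 0\<bar> \<le> 3 * R / (eps' * real N) / real (card W)"
          using tb[of "f a" a w] fb[OF a] that a by auto
      qed
      also have "\<dots> = 3 * R / (eps' * real N)" using Wpos by simp
      finally show ?thesis .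
    qed
    have "\<bar>y2 v w\<bar> \<le> 3 * R / (eps' * real N) + 3 * R / (eps' * real N)"
      unfolding y2_def using s1 s2 by (smt (verit))
    thus ?thesis by simp
  qed
  have ybnd: "\<bar>x''(v,w) - \<alpha> * x'(v,w)\<bar> \<le> \<delta> / (2 * b * real N)" if "v \<in> W" "w \<in> W" for v w
  proof -
    have vu: "v \<noteq> u" "w \<noteq> u" using that uW by auto
    have "x''(v,w) - \<alpha> * x'(v,w) = - (\<rho> v / real (card (Out v))) + y2 v w" unfolding x''_def using vu by simp
    hence "\<bar>x''(v,w) - \<alpha> * x'(v,w)\<bar> \<le> 2 * R / real N + 6 * R / (eps' * real N)"
      using rhoO[OF that(1)] y2b[OF that(2), of v] by linarith
    also have "\<dots> \<le> 8 * R / (eps' * real N)"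
    proof -
      have "2 * R / real N \<le> 2 * R / (eps' * real N)" using Rpos Npos epspos eps1
        by (intro divide_left_mono) (auto intro: mult_left_le_one_le)
      thus ?thesis by simp
    qed
    also have "\<dots> \<le> \<delta> / (2 * b * real N)"
    proof -
      have "3 / real N \<le> 6 / real n'" using Nge Npos npos by (simp add: field_simps)
      hence "16 * b * R \<le> 16 * b * (6/real n' + 2*c)" unfolding R_def using b2 by (intro mult_left_mono) auto
      hence "16 * b * R \<le> eps' * \<delta>" using hD by linarith
      thus ?thesis using Npos epspos b2 by (simp add: field_simps)
    qed
    finally show ?thesis .
  qed
  have swapOI: "(\<Sum>v\<in>W. \<Sum>a\<in>Out v. g v a) = (\<Sum>a\<in>W. \<Sum>v\<in>Inn a. g v a)" for g :: "'a \<Rightarrow> 'a \<Rightarrow> real"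
    unfolding Out_def Inn_def by (rule sum.swap_restrict[OF finW finW])
  have sumA: "(\<Sum>a\<in>W. if a\<in>A then 1/real (card A) else 0) = 1"
  proof -
    have "(\<Sum>a\<in>W. if a\<in>A then 1/real (card A) else 0) = (\<Sum>a\<in>W \<inter> A. 1/real (card A))"
      by (rule sum.inter_restrict[OF finW, symmetric])
    also have "W \<inter> A = A" using AW by auto
    finally show ?thesis using Apos by simp
  qed
  have sumB: "(\<Sum>a\<in>W. if a\<in>B then 1/real (card B) else 0) = 1"
  proof -
    have "(\<Sum>a\<in>W. if a\<in>B then 1/real (card B) else 0) = (\<Sum>a\<in>W \<inter> B. 1/real (card B))"
      by (rule sum.inter_restrict[OF finW, symmetric])
    also have "W \<inter> B = B" using BW by auto
    finally show ?thesis using Bpos by simp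
  qed
  have sumrho: "(\<Sum>v\<in>W. \<rho> v) = \<alpha> * (\<Sum>v\<in>W. \<Sum>w\<in>Out v. x'(v,w)) + 1 - real (card W)"
    unfolding \<rho>_def sum.distrib sum_subtractf sum_distrib_left[symmetric] using sumB by simp
  have sumf: "(\<Sum>a\<in>W. f a) = 0"
  proof -
    have r: "(\<Sum>a\<in>W. \<Sum>v\<in>Inn a. \<rho> v / real (card (Out v))) = (\<Sum>v\<in>W. \<rho> v)"
    proof -
      have "(\<Sum>a\<in>W. \<Sum>v\<in>Inn a. \<rho> v / real (card (Out v))) = (\<Sum>v\<in>W. \<Sum>a\<in>Out v. \<rho> v / real (card (Out v)))"
        using swapOI[of "\<lambda>v a. \<rho> v / real (card (Out v))"] by simp
      also have "\<dots> = (\<Sum>v\<in>W. \<rho> v)"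
        using Outpos WV by (intro sum.cong) force+
      finally show ?thesis .
    qed
    have t: "(\<Sum>a\<in>W. \<Sum>v\<in>Inn a. x'(v,a)) = (\<Sum>v\<in>W. \<Sum>w\<in>Out v. x'(v,w))"
      using swapOI[of "\<lambda>v a. x'(v,a)"] by simp
    show ?thesis unfolding f_def sum.distrib sum_subtractf sum_distrib_left[symmetric] using sumA r t sumrho by simp
  qed
  have sumy2_row: "(\<Sum>w\<in>Out v. y2 v w) = 0" if "v \<in> W" for v
  proof -
    define g where "g w a' = (if v \<in> C w a' then - f w / (real (card W) * real (card (C w a'))) else 0)" for w a'
    have y2g: "y2 v w = (\<Sum>a'\<in>W. g w a') - (\<Sum>a\<in>W. g a w)" for w
      unfolding y2_def g_def by (simp add: sum_negf[symmetric]) (intro sum.cong, auto)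
    have "(\<Sum>w\<in>Out v. y2 v w) = (\<Sum>w\<in>W. y2 v w)"
    proof (rule sum.mono_neutral_left[OF finW OutW], intro ballI)
      fix w assume w: "w \<in> W - Out v"
      hence "v \<notin> C w a'" "v \<notin> C a w" for a a' using that unfolding C_def Inn_def Out_def by auto
      thus "y2 v w = 0" unfolding y2_def by simp
    qed
    also have "\<dots> = (\<Sum>w\<in>W. \<Sum>a'\<in>W. g w a') - (\<Sum>w\<in>W. \<Sum>a\<in>W. g a w)"
      unfolding y2g sum_subtractf ..
    also have "(\<Sum>w\<in>W. \<Sum>a\<in>W. g a w) = (\<Sum>a\<in>W. \<Sum>w\<in>W. g a w)" by (rule sum.swap)
    finally show ?thesis by simp
  qed
  have sumy2_col: "(\<Sum>v\<in>Inn w. y2 v w) = - f w" if "w \<in> W" for w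
  proof -
    have cnt: "(\<Sum>v\<in>Inn w. if v \<in> C a b then k else 0) = real (card (C a b)) * k" if "C a b \<subseteq> Inn w" for a b k
    proof -
      have "(\<Sum>v\<in>Inn w. if v \<in> C a b then k else 0) = (\<Sum>v\<in>Inn w \<inter> C a b. k)"
        by (rule sum.inter_restrict[OF finInn, symmetric])
      also have "Inn w \<inter> C a b = C a b" using that by auto
      finally show ?thesis by simp
    qed
    have "(\<Sum>v\<in>Inn w. y2 v w) = (\<Sum>a'\<in>W. \<Sum>v\<in>Inn w. if v \<in> C w a' then - f w / (real (card W) * real (card (C w a'))) else 0)
        + (\<Sum>a\<in>W. \<Sum>v\<in>Inn w. if v \<in> C a w then f a / (real (card W) * real (card (C a w))) else 0)"
      unfolding y2_def sum.distrib by (simp add: sum.swap[of _ "Inn w"])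
    also have "(\<Sum>a'\<in>W. \<Sum>v\<in>Inn w. if v \<in> C w a' then - f w / (real (card W) * real (card (C w a'))) else 0)
        = (\<Sum>a'\<in>W. - f w / real (card W))"
    proof (rule sum.cong[OF refl])
      fix a' assume "a' \<in> W"
      hence cp: "card (C w a') > 0" using Cpos that by auto
      show "(\<Sum>v\<in>Inn w. if v \<in> C w a' then - f w / (real (card W) * real (card (C w a'))) else 0) = - f w / real (card W)"
        using cnt[OF CInn(1)] cp by simp
    qed
    also have "(\<Sum>a\<in>W. \<Sum>v\<in>Inn w. if v \<in> C a w then f a / (real (card W) * real (card (C a w))) else 0)
        = (\<Sum>a\<in>W. f a / real (card W))"
    proof (rule sum.cong[OF refl])
      fix a assume "a \<in> W"
      hence cp: "card (C a w) > 0" using Cpos that by auto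
      show "(\<Sum>v\<in>Inn w. if v \<in> C a w then f a / (real (card W) * real (card (C a w))) else 0) = f a / real (card W)"
        using cnt[OF CInn(2)] cp by simp
    qed
    also have "(\<Sum>a\<in>W. f a / real (card W)) = 0" using sumf by (simp add: sum_divide_distrib[symmetric])
    finally show ?thesis using Wpos by simp
  qed
  have E''mem: "((v,w) \<in> E'') = ((v,w) \<in> E \<and> v \<in> V'' \<and> w \<in> V'')" for v w
    unfolding E''_def induced_def by auto
  have cardWN: "real (card W) \<le> real N" using cardW' by simp
  have xW: "1/((1+\<delta>)*b*real N) \<le> x''(v,w) \<and> x''(v,w) \<le> (1+\<delta>)*b/real N"
    if "v \<in> W" "w \<in> W" "(v,w) \<in> E" for v w
  proof -
    have e': "(v,w) \<in> E'" using that WV' E'mem by auto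
    have l: "1/(b*real N) \<le> \<alpha> * x'(v,w)"
    proof -
      have "1/(b*real N) = \<alpha> * (1 / (b * real n'))" unfolding \<alpha>_def using npos Npos by simp
      also have "\<dots> \<le> \<alpha> * x'(v,w)" using xbnd[OF e'] alpha_ge1 by (intro mult_left_mono) auto
      finally show ?thesis .
    qed
    have r: "\<alpha> * x'(v,w) \<le> b/real N"
    proof -
      have "\<alpha> * x'(v,w) \<le> \<alpha> * (b / real n')" using xbnd[OF e'] alpha_ge1 by (intro mult_left_mono) auto
      also have "\<dots> = b/real N" unfolding \<alpha>_def using npos by simp
      finally show ?thesis .
    qed
    show ?thesis using normal_num[OF dpos d1 b2 Npos l r ybnd[OF that(1,2)]] .
  qed
  have xA: "1/((1+\<delta>)*b*real N) \<le> 1/real (card A) \<and> 1/real (card A) \<le> (1+\<delta>)*b/real N"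
  proof -
    have "real (card A) \<le> real N" using card_mono[OF finW AW] cardWN by linarith
    thus ?thesis using normal_num2[of "(1+\<delta>)*b" "real N" "real (card A)"] b2 dpos Npos Age
      by (simp add: mult.assoc) (smt (verit) mult_le_cancel_right1)
  qed
  have xB: "1/((1+\<delta>)*b*real N) \<le> 1/real (card B) \<and> 1/real (card B) \<le> (1+\<delta>)*b/real N"
  proof -
    have "real (card B) \<le> real N" using card_mono[OF finW BW] cardWN by linarith
    thus ?thesis using normal_num2[of "(1+\<delta>)*b" "real N" "real (card B)"] b2 dpos Npos Bge
      by (simp add: mult.assoc) (smt (verit) mult_le_cancel_right1)
  qed
  have xall: "1/((1+\<delta>)*b*real N) \<le> x'' e \<and> x'' e \<le> (1+\<delta>)*b/real N" if "e \<in> E''" for e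
  proof -
    obtain v w where e: "e = (v,w)" by force
    have vw: "(v,w) \<in> E" "v \<in> V''" "w \<in> V''" using that e E''mem by auto
    show ?thesis
    proof (cases "v = u")
      case True
      hence "w \<in> A" using vw noloop unfolding A_def V''_def by auto
      thus ?thesis using xA True e unfolding x''_def by simp
    next
      case vu: False
      show ?thesis
      proof (cases "w = u")
        case True
        hence "v \<in> B" using vw noloop vu unfolding B_def V''_def by auto
        thus ?thesis using xB True vu e unfolding x''_def by simp
      next
        case False
        hence "v \<in> W" "w \<in> W" using vu vw unfolding V''_def by auto
        thus ?thesis using xW vw(1) e by simp
      qed
    qed
  qed
  have bnorm: "b_normal ((1 + \<delta>) * b) V'' E'' x''"
    unfolding b_normal_def cardV'' using xall by (simp add: mult.assoc)
  have xnn: "x'' e \<ge> 0" if "e \<in> E''" for e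
  proof -
    have "0 \<le> 1/((1+\<delta>)*b*real N)" using dpos b2 Npos by simp
    thus ?thesis using xall[OF that] by linarith
  qed
  have rowW: "(\<Sum>w\<in>outN E'' v. x''(v,w)) = 1" if "v \<in> W" for v
  proof -
    have vu: "v \<noteq> u" using that uW by auto
    have "(\<Sum>w\<in>Out v. x''(v,w)) = (\<Sum>w\<in>Out v. \<alpha> * x'(v,w) - \<rho> v / real (card (Out v)) + y2 v w)"
      using vu uW OutW unfolding x''_def by (intro sum.cong) auto
    also have "\<dots> = \<alpha> * (\<Sum>w\<in>Out v. x'(v,w)) - \<rho> v"
      unfolding sum.distrib sum_subtractf sumy2_row[OF that] sum_distrib_left[symmetric]
      using Outpos[of v] that WV by auto
    finally have s1: "(\<Sum>w\<in>Out v. x''(v,w)) = \<alpha> * (\<Sum>w\<in>Out v. x'(v,w)) - \<rho> v" .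
    show ?thesis
    proof (cases "v \<in> B")
      case True
      have "(\<Sum>w\<in>outN E'' v. x''(v,w)) = (\<Sum>w\<in>insert u (Out v). x''(v,w))" using outW[OF that] True by simp
      also have "\<dots> = x''(v,u) + (\<Sum>w\<in>Out v. x''(v,w))" using finOut OutW uW by (subst sum.insert) auto
      finally show ?thesis using s1 True vu unfolding \<rho>_def by (simp add: x''_def)
    next
      case False
      thus ?thesis using outW[OF that] s1 unfolding \<rho>_def by simp
    qed
  qed
  have colW: "(\<Sum>v\<in>inN E'' w. x''(v,w)) = 1" if "w \<in> W" for w
  proof -
    have wu: "w \<noteq> u" using that uW by auto
    have "(\<Sum>v\<in>Inn w. x''(v,w)) = (\<Sum>v\<in>Inn w. \<alpha> * x'(v,w) - \<rho> v / real (card (Out v)) + y2 v w)"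
      using wu uW InnW unfolding x''_def by (intro sum.cong) auto
    also have "\<dots> = \<alpha> * (\<Sum>v\<in>Inn w. x'(v,w)) - (\<Sum>v\<in>Inn w. \<rho> v / real (card (Out v))) - f w"
      unfolding sum.distrib sum_subtractf sumy2_col[OF that] sum_distrib_left[symmetric] by simp
    finally have s1: "(\<Sum>v\<in>Inn w. x''(v,w)) = \<alpha> * (\<Sum>v\<in>Inn w. x'(v,w)) - (\<Sum>v\<in>Inn w. \<rho> v / real (card (Out v))) - f w" .
    show ?thesis
    proof (cases "w \<in> A")
      case True
      have "(\<Sum>v\<in>inN E'' w. x''(v,w)) = (\<Sum>v\<in>insert u (Inn w). x''(v,w))" using inW[OF that] True by simp
      also have "\<dots> = x''(u,w) + (\<Sum>v\<in>Inn w. x''(v,w))" using finInn InnW uW by (subst sum.insert) auto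
      finally show ?thesis using s1 True wu unfolding f_def by (simp add: x''_def)
    next
      case False
      thus ?thesis using inW[OF that] s1 unfolding f_def by simp
    qed
  qed
  have rowu: "(\<Sum>w\<in>outN E'' u. x''(u,w)) = 1"
  proof -
    have "(\<Sum>w\<in>outN E'' u. x''(u,w)) = (\<Sum>w\<in>A. 1 / real (card A))"
      unfolding outu x''_def by (intro sum.cong) auto
    thus ?thesis using Apos by simp
  qed
  have colu: "(\<Sum>v\<in>inN E'' u. x''(v,u)) = 1"
  proof -
    have "(\<Sum>v\<in>inN E'' u. x''(v,u)) = (\<Sum>v\<in>B. 1 / real (card B))"
      unfolding inu x''_def using BW uW by (intro sum.cong) auto
    thus ?thesis using Bpos by simp
  qed
  have pfm'': "perfect_frac_matching V'' E'' x''"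
    unfolding perfect_frac_matching_def using xnn rowW colW rowu colu unfolding V''_def by auto
  define EW where "EW = {e\<in>E. fst e \<in> W \<and> snd e \<in> W}"
  define Y where "Y = \<delta> / (2 * b * real N)"
  define K1 where "K1 = log 2 (b * real n')"
  define H where "H = entropy E' x'"
  define T where "T = (\<Sum>e\<in>EW. x' e)"
  define P where "P = (\<Sum>e\<in>EW. x' e * log 2 (1 / x' e))"
  have E'sub: "E' \<subseteq> V' \<times> V'" unfolding E'_def induced_def by auto
  have finE': "finite E'" using finite_subset[OF E'sub] finV' by blast
  have E''sub: "E'' \<subseteq> V'' \<times> V''" unfolding E''_def induced_def by auto
  have finV'': "finite V''" unfolding V''_def using finW by simp
  have finE'': "finite E''" using finite_subset[OF E''sub] finV'' by blast
  have EWsub'': "EW \<subseteq> E''" unfolding EW_def E''_def induced_def V''_def by auto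
  have EWsub': "EW \<subseteq> E'" unfolding EW_def E'_def induced_def using WV' by auto
  have finEW: "finite EW" using finite_subset[OF EWsub' finE'] .
  have EWSigma: "EW = Sigma W Out" unfolding EW_def Out_def by auto
  have phi0: "0 \<le> t * log 2 (1/t)" if "0 < t" "t \<le> 1" for t :: real
    using that by (intro mult_nonneg_nonneg) auto
  have rowV'': "(\<Sum>w\<in>outN E'' v. x''(v,w)) = 1" if "v \<in> V''" for v
    using that rowW rowu unfolding V''_def by auto
  have x''pos: "x'' e > 0" if "e \<in> E''" for e
  proof -
    have "0 < 1/((1+\<delta>)*b*real N)" using dpos b2 Npos by simp
    thus ?thesis using xall[OF that] by linarith
  qed
  have x''le1: "x'' e \<le> 1" if "e \<in> E''" for e
  proof -
    obtain v w where e: "e = (v,w)" by force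
    have v: "v \<in> V''" and w: "w \<in> outN E'' v" using that e E''sub unfolding outN_def by auto
    have "outN E'' v \<subseteq> V''" using E''sub unfolding outN_def by auto
    hence finO: "finite (outN E'' v)" using finV'' finite_subset by blast
    have "x''(v,w) \<le> (\<Sum>w\<in>outN E'' v. x''(v,w))"
      by (rule member_le_sum[OF w _ finO]) (use xnn in \<open>auto simp: outN_def\<close>)
    thus ?thesis using rowV''[OF v] e by simp
  qed
  have bN: "b \<le> real N" using bn' Nge by linarith
  have axW: "1/(b*real N) \<le> \<alpha> * x' e \<and> \<alpha> * x' e \<le> b/real N" if "e \<in> E'" for e
  proof -
    have "1/(b*real N) = \<alpha> * (1 / (b * real n'))" unfolding \<alpha>_def using npos Npos by simp
    also have "\<dots> \<le> \<alpha> * x' e" using xbnd[OF that] alpha_ge1 by (intro mult_left_mono) auto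
    finally have l: "1/(b*real N) \<le> \<alpha> * x' e" .
    have "\<alpha> * x' e \<le> \<alpha> * (b / real n')" using xbnd[OF that] alpha_ge1 by (intro mult_left_mono) auto
    also have "\<dots> = b/real N" unfolding \<alpha>_def using npos by simp
    finally show ?thesis using l by simp
  qed
  have ent1: "entropy E'' x'' \<ge> (\<Sum>e\<in>EW. x'' e * log 2 (1 / x'' e))"
  proof -
    have "0 \<le> x'' e * log 2 (1/x'' e)" if "e \<in> E''" for e using phi0[OF x''pos[OF that] x''le1[OF that]] .
    thus ?thesis unfolding entropy_def by (intro sum_mono2[OF finE'' EWsub'']) auto
  qed
  have bNpos: "b * real N \<ge> 1"
  proof -
    have "real N \<ge> 1" using Nge n4 by linarith
    hence "b * real N \<ge> b * 1" using b2 by (intro mult_left_mono) auto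
    thus ?thesis using b2 by linarith
  qed
  have lg0: "0 \<le> log 2 (b * real N)" using bNpos by simp
  have ent2: "x'' e * log 2 (1 / x'' e) \<ge> (\<alpha> * x' e) * log 2 (1 / (\<alpha> * x' e)) - Y * (log 2 (b * real N) + 4)"
    if "e \<in> EW" for e
  proof -
    obtain v w where e: "e = (v,w)" by force
    have vw: "v \<in> W" "w \<in> W" using that e unfolding EW_def by auto
    have e': "e \<in> E'" and e'': "e \<in> E''" using that EWsub' EWsub'' by auto
    have "b / real N \<le> 1" using bN Npos by (simp add: divide_le_eq)
    hence t1: "\<alpha> * x' e \<le> 1" using axW[OF e'] by linarith
    have t0: "\<alpha> * x' e > 0" using xpos[OF e'] alpha_ge1 by simp
    have yb: "\<bar>x'' e - \<alpha> * x' e\<bar> \<le> Y" using ybnd[OF vw] e unfolding Y_def by simp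
    have Yle: "Y \<le> \<alpha> * x' e" 
    proof -
      have "Y \<le> 1 / (2 * b * real N)" unfolding Y_def using d1 b2 Npos by (simp add: divide_right_mono)
      also have "\<dots> \<le> 1/(b*real N)" using b2 Npos by (simp add: field_simps)
      finally show ?thesis using axW[OF e'] by linarith
    qed
    have s2: "x'' e \<le> 2 * (\<alpha> * x' e)" using yb Yle by (simp add: abs_le_iff)
    have k: "1 / (b * real N) \<le> \<alpha> * x' e" using axW[OF e'] by simp
    show ?thesis using phi_pert[OF t0 t1 k bNpos x''pos[OF e''] s2 yb] .
  qed
  have ent3: "(\<Sum>e\<in>EW. x'' e * log 2 (1 / x'' e)) \<ge> (\<Sum>e\<in>EW. (\<alpha> * x' e) * log 2 (1 / (\<alpha> * x' e))) - real N * real N * (Y * (log 2 (b * real N) + 4))"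
  proof -
    have "(\<Sum>e\<in>EW. x'' e * log 2 (1 / x'' e)) \<ge> (\<Sum>e\<in>EW. (\<alpha> * x' e) * log 2 (1 / (\<alpha> * x' e)) - Y * (log 2 (b * real N) + 4))"
      using ent2 by (intro sum_mono) auto
    moreover have "(\<Sum>e\<in>EW. (\<alpha> * x' e) * log 2 (1 / (\<alpha> * x' e)) - Y * (log 2 (b * real N) + 4))
       = (\<Sum>e\<in>EW. (\<alpha> * x' e) * log 2 (1 / (\<alpha> * x' e))) - real (card EW) * (Y * (log 2 (b * real N) + 4))"
      by (simp add: sum_subtractf)
    moreover have "real (card EW) * (Y * (log 2 (b * real N) + 4)) \<le> real N * real N * (Y * (log 2 (b * real N) + 4))"
    proof -
      have "EW \<subseteq> W \<times> W" unfolding EW_def by auto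
      hence "card EW \<le> card (W \<times> W)" using finW by (intro card_mono) auto
      hence "card EW \<le> card W * card W" by (simp add: card_cartesian_product)
      hence "real (card EW) \<le> real (card W * card W)" by (simp only: of_nat_le_iff)
      hence "real (card EW) \<le> real (card W) * real (card W)" by simp
      also have "\<dots> \<le> real N * real N" using cardWN by (intro mult_mono) auto
      finally have "real (card EW) \<le> real N * real N" .
      moreover have "0 \<le> Y * (log 2 (b * real N) + 4)" unfolding Y_def using dpos b2 Npos lg0 by simp
      ultimately show ?thesis by (intro mult_right_mono) auto
    qed
    ultimately show ?thesis by linarith
  qed
  have errb: "real N * real N * (Y * (log 2 (b * real N) + 4)) \<le> real n' * \<delta> * (K1 + 4)"
  proof -
    have "real N * real N * (Y * (log 2 (b * real N) + 4)) = real N * \<delta> * (log 2 (b * real N) + 4) / (2*b)"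
      unfolding Y_def using Npos b2 by (simp add: field_simps)
    also have "\<dots> \<le> real N * \<delta> * (log 2 (b * real N) + 4) / 1"
      using Npos dpos lg0 b2 by (intro divide_left_mono) auto
    also have "\<dots> = real N * \<delta> * (log 2 (b * real N) + 4)" by simp
    also have "\<dots> \<le> real n' * \<delta> * (K1 + 4)"
    proof -
      have "b * real N \<le> b * real n'" using b2 realN by (intro mult_left_mono) auto
      hence "log 2 (b * real N) \<le> K1" unfolding K1_def using b2 Npos by (intro log_mono) auto
      moreover have "real N \<le> real n'" using realN by simp
      moreover have "0 \<le> log 2 (b * real N) + 4" using bNpos by simp
      ultimately show ?thesis using dpos Npos by (intro mult_mono) auto
    qed
    finally show ?thesis .
  qed
  have ent4: "(\<Sum>e\<in>EW. (\<alpha> * x' e) * log 2 (1 / (\<alpha> * x' e))) = \<alpha> * P - \<alpha> * log 2 \<alpha> * T"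
  proof -
    have "(\<Sum>e\<in>EW. (\<alpha> * x' e) * log 2 (1 / (\<alpha> * x' e))) = (\<Sum>e\<in>EW. \<alpha> * (x' e * log 2 (1 / x' e)) - \<alpha> * log 2 \<alpha> * x' e)"
    proof (rule sum.cong[OF refl])
      fix e assume "e \<in> EW"
      hence xp: "x' e > 0" using xpos EWsub' by blast
      have ap: "\<alpha> > 0" using alpha_ge1 by simp
      have lg: "log 2 (1 / (\<alpha> * x' e)) = log 2 (1 / x' e) - log 2 \<alpha>"
        using xp ap by (simp add: log_divide log_mult)
      show "(\<alpha> * x' e) * log 2 (1 / (\<alpha> * x' e)) = \<alpha> * (x' e * log 2 (1 / x' e)) - \<alpha> * log 2 \<alpha> * x' e"
        unfolding lg by (simp add: algebra_simps)
    qed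
    thus ?thesis unfolding P_def T_def by (simp add: sum_subtractf sum_distrib_left)
  qed
  have T0: "0 \<le> T" unfolding T_def by (intro sum_nonneg) (meson subsetD less_imp_le xpos EWsub')
  have T1: "T \<le> real N - 1"
  proof -
    have "T = (\<Sum>v\<in>W. \<Sum>w\<in>Out v. x'(v,w))" unfolding T_def EWSigma
      by (subst sum.Sigma[OF finW]) (auto simp: finOut)
    also have "\<dots> \<le> (\<Sum>v\<in>W. 1)"
    proof (rule sum_mono)
      fix v assume v: "v \<in> W"
      have "q v \<ge> 0" unfolding q_def using xpos by (intro sum_nonneg) (auto simp: outN_def intro: less_imp_le)
      thus "(\<Sum>w\<in>Out v. x'(v,w)) \<le> 1" using sumOut[OF v] by simp
    qed
    finally show ?thesis using cardW' by simp
  qed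
  have xle1': "x' e \<le> 1" if "e \<in> E'" for e
  proof -
    have "b / real n' \<le> 1" using bn' npos b2 by (simp add: divide_le_eq)
    thus ?thesis using xbnd[OF that] by linarith
  qed
  have phi'0: "0 \<le> x' e * log 2 (1 / x' e)" if "e \<in> E'" for e using phi0 xpos[OF that] xle1'[OF that] by simp
  have Hsum: "(\<Sum>v\<in>V'. hplus E' x' v) = H" "(\<Sum>v\<in>V'. hminus E' x' v) = H"
  proof -
    show "(\<Sum>v\<in>V'. hplus E' x' v) = H"
      unfolding hplus_def H_def entropy_def
      using sum_out_pairs[OF finV' E'sub, where P=UNIV and g="\<lambda>e. x' e * log 2 (1 / x' e)"] by simp
    show "(\<Sum>v\<in>V'. hminus E' x' v) = H"
      unfolding hminus_def H_def entropy_def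
      using sum_in_pairs[OF finV' E'sub, where P=UNIV and g="\<lambda>e. x' e * log 2 (1 / x' e)"] by simp
  qed
  have ent5: "P \<ge> H - 2*(real m+1)/real n'*H - 2*real n'*c"
  proof -
    define Q1 where "Q1 = {e\<in>E'. snd e \<in> VQ}"
    define Q2 where "Q2 = {e\<in>E'. fst e \<in> VQ}"
    let ?g = "\<lambda>e. x' e * log 2 (1 / x' e)"
    have Hs: "H = sum ?g (E' - EW) + P" unfolding H_def entropy_def P_def
      using sum.subset_diff[OF EWsub' finE'] by simp
    have z1: "sum ?g (E' - EW) \<le> sum ?g (Q1 \<union> Q2)"
    proof (rule sum_mono2)
      show "finite (Q1 \<union> Q2)" unfolding Q1_def Q2_def using finE' by simp
      show "E' - EW \<subseteq> Q1 \<union> Q2" unfolding Q1_def Q2_def EW_def W_def using E'sub E'mem by auto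
      show "0 \<le> ?g e" if "e \<in> Q1 \<union> Q2 - (E' - EW)" for e
      proof -
        have "e \<in> E'" using that unfolding Q1_def Q2_def by blast
        thus ?thesis by (rule phi'0)
      qed
    qed
    have z2: "sum ?g (Q1 \<union> Q2) \<le> sum ?g Q1 + sum ?g Q2"
    proof -
      have "sum ?g (Q1 \<union> Q2) + sum ?g (Q1 \<inter> Q2) = sum ?g Q1 + sum ?g Q2"
        by (rule sum.union_inter) (use finE' in \<open>auto simp: Q1_def Q2_def\<close>)
      moreover have "0 \<le> sum ?g (Q1 \<inter> Q2)"
      proof (rule sum_nonneg)
        fix e assume "e \<in> Q1 \<inter> Q2"
        hence "e \<in> E'" unfolding Q1_def by blast
        thus "0 \<le> ?g e" by (rule phi'0)
      qed
      ultimately show ?thesis by linarith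
    qed
    have z3: "sum ?g Q1 \<le> real (m+1)/real n' * H + real n' * c"
    proof -
      have "sum ?g Q1 = (\<Sum>v\<in>V'. \<Sum>w\<in>outN E' v \<inter> VQ. x'(v,w) * log 2 (1 / x'(v,w)))"
        unfolding Q1_def using sum_out_pairs[OF finV' E'sub, where P=VQ and g="?g"] by simp
      also have "\<dots> \<le> (\<Sum>v\<in>V'. real (m+1)/real n' * hplus E' x' v + c)"
        using wb unfolding E'_def by (intro sum_mono) (auto simp: abs_less_iff)
      also have "\<dots> = real (m+1)/real n' * (\<Sum>v\<in>V'. hplus E' x' v) + real (card V') * c"
        by (simp add: sum.distrib sum_distrib_left)
      also have "\<dots> = real (m+1)/real n' * H + real n' * c"
        using Hsum(1) cardV' by simp
      finally show ?thesis .
    qed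
    have z4: "sum ?g Q2 \<le> real (m+1)/real n' * H + real n' * c"
    proof -
      have "sum ?g Q2 = (\<Sum>w\<in>V'. \<Sum>v\<in>inN E' w \<inter> VQ. x'(v,w) * log 2 (1 / x'(v,w)))"
        unfolding Q2_def using sum_in_pairs[OF finV' E'sub, where P=VQ and g="?g"] by simp
      also have "\<dots> \<le> (\<Sum>v\<in>V'. real (m+1)/real n' * hminus E' x' v + c)"
        using wb unfolding E'_def by (intro sum_mono) (auto simp: abs_less_iff)
      also have "\<dots> = real (m+1)/real n' * (\<Sum>v\<in>V'. hminus E' x' v) + real (card V') * c"
        by (simp add: sum.distrib sum_distrib_left)
      also have "\<dots> = real (m+1)/real n' * H + real n' * c"
        using Hsum(2) cardV' by simp
      finally show ?thesis .
    qed
    have zz: "sum ?g (E' - EW) \<le> (real (m+1)/real n' * H + real n' * c) + (real (m+1)/real n' * H + real n' * c)"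
      by (rule order_trans[OF z1 order_trans[OF z2 add_mono[OF z3 z4]]])
    have eqz: "(real (m+1)/real n' * H + real n' * c) + (real (m+1)/real n' * H + real n' * c) = 2*(real m+1)/real n'*H + 2*real n'*c"
      using npos by (simp add: field_simps)
    have "sum ?g (E' - EW) \<le> 2*(real m+1)/real n'*H + 2*real n'*c" using zz unfolding eqz .
    thus ?thesis using Hs by linarith
  qed
  have H0: "0 \<le> H" unfolding H_def entropy_def by (intro sum_nonneg) (rule phi'0)
  have Hu: "H \<le> real n' * K1"
  proof -
    have "H \<le> (\<Sum>e\<in>E'. x' e * K1)" unfolding H_def entropy_def
    proof (rule sum_mono)
      fix e assume e: "e \<in> E'"
      have "1 / x' e \<le> 1 / (1 / (b * real n'))" using xbnd[OF e] xpos[OF e] b2 npos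
        by (intro divide_left_mono) auto
      hence "1 / x' e \<le> b * real n'" by simp
      hence "log 2 (1 / x' e) \<le> K1" unfolding K1_def using xpos[OF e] by (intro log_mono) auto
      thus "x' e * log 2 (1 / x' e) \<le> x' e * K1" using xpos[OF e] by (intro mult_left_mono) auto
    qed
    also have "\<dots> = (\<Sum>e\<in>E'. x' e) * K1" by (simp add: sum_distrib_right)
    also have "(\<Sum>e\<in>E'. x' e) = real n'"
    proof -
      have "(\<Sum>e\<in>E'. x' e) = (\<Sum>v\<in>V'. \<Sum>w\<in>outN E' v \<inter> UNIV. x'(v,w))"
        using sum_out_pairs[OF finV' E'sub, where P=UNIV and g=x'] by simp
      also have "\<dots> = (\<Sum>v\<in>V'. 1)" using rows(1) by simp
      finally show ?thesis using cardV' by simp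
    qed
    finally show ?thesis by simp
  qed
  have K0: "K1 \<ge> 0"
  proof -
    have "b * 1 \<le> b * real n'" using b2 n4 by (intro mult_left_mono) auto
    hence "1 \<le> b * real n'" using b2 by linarith
    thus ?thesis unfolding K1_def by simp
  qed
  have la0: "0 \<le> log 2 \<alpha>" using alpha_ge1 by simp
  have la1: "log 2 \<alpha> \<le> 2 * real m / real N"
  proof -
    have "ln \<alpha> \<le> \<alpha> - 1" using alpha_ge1 by (intro ln_le_minus_one) simp
    also have "\<alpha> - 1 = real m / real N" unfolding \<alpha>_def using realN Npos by (simp add: field_simps)
    finally have l: "ln \<alpha> \<le> real m / real N" .
    have "log 2 \<alpha> = ln \<alpha> / ln 2" by (simp add: log_def)
    also have "\<dots> \<le> (real m / real N) / (1/2)"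
      using l ln2_ge_half la0 alpha_ge1 by (intro frac_le) auto
    also have "\<dots> = 2 * real m / real N" by simp
    finally show ?thesis .
  qed
  have entfinal: "entropy E'' x'' \<ge> \<alpha> * P - \<alpha> * log 2 \<alpha> * T - real n' * \<delta> * (K1 + 4)"
    using ent1 ent3 ent4 errb by linarith
  have hS': "6*K1 + 4*real n'*c + 4 + real n'*\<delta>*(K1+4) \<le> S" using hS unfolding K1_def .
  have m0: "0 \<le> real m" by simp
  have fin: "entropy E'' x'' \<ge> real N / real n' * H - real N * log 2 \<alpha> - S"
    using final_arith[OF \<alpha>_def realN m0 msq Nge npos H0 Hu K0 ent5 T0 T1 la0 la1 entfinal hS' cpos] .
  show ?thesis using pfm'' bnorm fin unfolding V''_def W_def E''_def N_def H_def E'_def \<alpha>_def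
    by (intro exI[of _ x'']) auto
qed



lemma part2_num:
  fixes k X e c eps' n m :: real
  assumes "k \<ge> (1/2+eps')*n" "0 \<le> m" "m + 1 \<le> n" "n > 0" "X \<le> (m+1)/n*k + e"
    "3/2 + e \<le> c*n" "m \<le> n/2" "0 < eps'" "eps' \<le> 1" "c > 0"
  shows "k - X \<ge> (1/2+(eps'-2*c))*(n-m)"
proof -
  have f: "0 \<le> 1 - (m+1)/n" using assms by (simp add: field_simps)
  have "k*(1 - (m+1)/n) \<ge> (1/2+eps')*n*(1 - (m+1)/n)" using assms(1) f by (intro mult_right_mono) auto
  moreover have "(1/2+eps')*n*(1 - (m+1)/n) = (1/2+eps')*(n-m) - (1/2+eps')" using assms by (simp add: field_simps)
  moreover have "k - X \<ge> k*(1 - (m+1)/n) - e" using assms(5) by (simp add: algebra_simps)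
  moreover have "2*c*(n-m) \<ge> c*n"
  proof -
    have "2*c*(n-m) \<ge> 2*c*(n/2)" using assms by (intro mult_left_mono) auto
    thus ?thesis by simp
  qed
  moreover have "(1/2+(eps'-2*c))*(n-m) = (1/2+eps')*(n-m) - 2*c*(n-m)" by (simp add: algebra_simps)
  ultimately show ?thesis using assms by linarith
qed

lemma log_bound:
  fixes b x :: real
  assumes "2 \<le> b" "b \<le> x"
  shows "log 2 (b*x) \<le> 4 * ln x" "0 \<le> log 2 (b*x)"
proof -
  have "b*1 \<le> b*x" using assms by (intro mult_left_mono) auto
  hence bx: "b*x \<ge> 1" using assms by linarith
  have l0: "ln (b*x) \<ge> 0" using bx by simp
  have "log 2 (b*x) = ln (b*x) / ln 2" by (simp add: log_def)
  also have "\<dots> \<le> ln (b*x) / (1/2)" using l0 ln2_ge_half by (intro divide_left_mono) auto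
  also have "ln (b*x) \<le> ln (x*x)" using assms bx by (subst ln_le_cancel_iff) (auto intro: mult_right_mono)
  hence "ln (b*x) / (1/2) \<le> 4 * ln x" using assms by (simp add: ln_mult)
  finally show "log 2 (b*x) \<le> 4 * ln x" .
  show "0 \<le> log 2 (b*x)" using bx by simp
qed

lemma main_core:
  fixes n n' m :: nat and eps eps' b \<gamma> x :: real and V :: "nat set" and E :: "(nat\<times>nat) set"
    and V' VQ :: "nat set" and EQ :: "(nat\<times>nat) set" and x' :: "nat\<times>nat \<Rightarrow> real" and u :: nat
  assumes eps: "0 < eps'" "eps' \<le> 1" and b2: "2 \<le> b" and gam: "0 < \<gamma>" "\<gamma> \<le> 1/1000"
    and asy: "4 \<le> x \<and> (3*exp(sqrt(ln x)/1000) * x powr (1/4))^2 \<le> x \<and>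
     cF x \<le> eps'/8 \<and> 0 < cF x \<and> 4 \<le> eps' * x \<and> 16*b*(6/x + 2*cF x) \<le> eps' * dF x \<and>
     0 < dF x \<and> dF x \<le> 1 \<and>
     24 * ln x + 4*x*cF x + 4 + x*dF x*(4 * ln x + 4) \<le> sF x \<and>
     3/2 + eF x \<le> cF x * x \<and> 2*b \<le> x \<and> b \<le> x \<and> 1 < x"
    and xdef: "x = real n'"
    and p1: "eps_digraph n eps V E" and p2: "V' \<subseteq> V" and p3: "card V' = n'"
    and p4: "perfect_frac_matching V' (induced E V') x'"
    and p5: "\<forall>v\<in>V. real (card (outN E v \<inter> V')) \<ge> (1/2 + eps') * real n' \<and>
                    real (card (inN E v \<inter> V')) \<ge> (1/2 + eps') * real n'"
    and p7: "VQ \<subseteq> V'" and p9: "card VQ = m + 1"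
    and p11: "real (card VQ) \<le> 3 * exp (\<gamma> * sqrt (ln (real n'))) * real n' powr (1/4)"
    and p13: "well_behaved V E V' x' VQ"
    and p14: "u \<in> V - V'"
  shows "(\<forall>v\<in>V.
               \<bar>real (card (outN E v \<inter> V' \<inter> VQ))
                 - real (m + 1) / real n' * real (card (outN E v \<inter> V'))\<bar>
                 \<le> real n' powr (1/4 - 1 / (17 * sqrt (ln (real n')))) \<and>
               \<bar>real (card (inN E v \<inter> V' \<inter> VQ))
                 - real (m + 1) / real n' * real (card (inN E v \<inter> V'))\<bar>
                 \<le> real n' powr (1/4 - 1 / (17 * sqrt (ln (real n'))))) \<and>
            (\<forall>v\<in>V. real (card (outN E v \<inter> ((V' - VQ) \<union> {u}))) \<ge> (1/2 + (eps' - 2 * real n' powr (- 3/4 - 1 / (18 * sqrt (ln (real n')))))) * real (n' - m) \<and>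
                    real (card (inN E v \<inter> ((V' - VQ) \<union> {u}))) \<ge> (1/2 + (eps' - 2 * real n' powr (- 3/4 - 1 / (18 * sqrt (ln (real n')))))) * real (n' - m)) \<and>
            eps_digraph (n' - m) (eps' - 2 * real n' powr (- 3/4 - 1 / (18 * sqrt (ln (real n'))))) ((V' - VQ) \<union> {u}) (induced E ((V' - VQ) \<union> {u})) \<and>
            (b_normal b V' (induced E V') x' \<longrightarrow>
              (\<exists>x''. perfect_frac_matching ((V' - VQ) \<union> {u}) (induced E ((V' - VQ) \<union> {u})) x'' \<and>
                 b_normal ((1 + real n' powr (- 3/4 - 1 / (22 * sqrt (ln (real n'))))) * b)
                   ((V' - VQ) \<union> {u}) (induced E ((V' - VQ) \<union> {u})) x'' \<and>
                 entropy (induced E ((V' - VQ) \<union> {u})) x'' \<ge> real (n' - m) / real n' * entropy (induced E V') x'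
                   - real (n' - m) * log 2 (real n' / real (n' - m))
                   - real n' powr (1/4 - 1 / (24 * sqrt (ln (real n'))))))"
proof -
  define c where "c = real n' powr (- 3/4 - 1 / (18 * sqrt (ln (real n'))))"
  define \<delta> where "\<delta> = real n' powr (- 3/4 - 1 / (22 * sqrt (ln (real n'))))"
  define S where "S = real n' powr (1/4 - 1 / (24 * sqrt (ln (real n'))))"
  define e17 where "e17 = real n' powr (1/4 - 1 / (17 * sqrt (ln (real n'))))"
  define V'' where "V'' = (V' - VQ) \<union> {u}"
  have x1: "x > 1" using asy by simp
  have cc: "c = cF x" unfolding c_def cF_def using powr_rw[of x 18 "- 3/4"] x1 xdef by simp
  have dd: "\<delta> = dF x" unfolding \<delta>_def dF_def using powr_rw[of x 22 "- 3/4"] x1 xdef by simp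
  have ss: "S = sF x" unfolding S_def sF_def using powr_rw[of x 24 "1/4"] x1 xdef by simp
  have ee: "e17 = eF x" unfolding e17_def eF_def using powr_rw[of x 17 "1/4"] x1 xdef by simp
  have n4: "4 \<le> real n'" using asy xdef by simp
  have npos: "real n' > 0" using n4 by simp
  have dig: "digraph V E" using p1 unfolding eps_digraph_def by simp
  have finV: "finite V" using dig unfolding digraph_def by simp
  have finV': "finite V'" using finV p2 finite_subset by blast
  have finVQ: "finite VQ" using finV' p7 finite_subset by blast
  have mle: "m + 1 \<le> n'" using card_mono[OF finV' p7] p3 p9 by simp
  have msq: "real m ^ 2 \<le> real n'"
  proof -
    have s0: "sqrt (ln (real n')) \<ge> 0" using n4 by simp
    have "\<gamma> * sqrt (ln (real n')) \<le> (1/1000) * sqrt (ln (real n'))" using gam s0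
      by (intro mult_right_mono) auto
    hence "\<gamma> * sqrt (ln (real n')) \<le> sqrt (ln (real n')) / 1000" by simp
    hence "exp (\<gamma> * sqrt (ln (real n'))) \<le> exp (sqrt (ln (real n')) / 1000)" by simp
    hence "3 * exp (\<gamma> * sqrt (ln (real n'))) * real n' powr (1/4) \<le> 3*exp(sqrt(ln (real n'))/1000) * real n' powr (1/4)"
      by (intro mult_right_mono) auto
    hence "real m \<le> 3*exp(sqrt(ln (real n'))/1000) * real n' powr (1/4)" using p11 p9 by simp
    hence "real m ^ 2 \<le> (3*exp(sqrt(ln (real n'))/1000) * real n' powr (1/4))^2" by (intro power_mono) auto
    moreover have "(3*exp(sqrt(ln (real n'))/1000) * real n' powr (1/4))^2 \<le> real n'"
      using asy unfolding xdef by blast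
    ultimately show ?thesis by linarith
  qed
  have mhalf: "real m \<le> real n' / 2"
  proof -
    have "real m \<le> sqrt (real n')" using msq real_le_rsqrt by blast
    also have "sqrt (real n') \<le> real n' / 2"
    proof -
      have "sqrt (real n') * sqrt (real n') = real n'" by simp
      moreover have "2 \<le> sqrt (real n')" using n4 real_le_rsqrt[of 2 "real n'"] by simp
      moreover have "sqrt (real n') * 2 \<le> sqrt (real n') * sqrt (real n')"
        using \<open>2 \<le> sqrt (real n')\<close> by (intro mult_left_mono) auto
      ultimately show ?thesis by linarith
    qed
    finally show ?thesis .
  qed
  note wb = p13[unfolded well_behaved_def Let_def p3 p9]
  have wbA: "\<forall>S\<in>nbhd_family V E V'. \<bar>real (card (VQ \<inter> S)) - real (m+1) / real n' * real (card S)\<bar> < e17"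
    using wb unfolding e17_def by blast
  have part1: "\<bar>real (card (outN E v \<inter> V' \<inter> VQ)) - real (m + 1) / real n' * real (card (outN E v \<inter> V'))\<bar> < e17 \<and>
               \<bar>real (card (inN E v \<inter> V' \<inter> VQ)) - real (m + 1) / real n' * real (card (inN E v \<inter> V'))\<bar> < e17"
    if "v \<in> V" for v
  proof -
    have S1: "outN E v \<inter> V' \<in> nbhd_family V E V'" and S2: "inN E v \<inter> V' \<in> nbhd_family V E V'"
      using that unfolding nbhd_family_def by blast+
    have eq1: "VQ \<inter> (outN E v \<inter> V') = outN E v \<inter> V' \<inter> VQ" and eq2: "VQ \<inter> (inN E v \<inter> V') = inN E v \<inter> V' \<inter> VQ" by auto
    have a1: "\<bar>real (card (VQ \<inter> (outN E v \<inter> V'))) - real (m+1) / real n' * real (card (outN E v \<inter> V'))\<bar> < e17"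
      using wbA S1 by blast
    have a2: "\<bar>real (card (VQ \<inter> (inN E v \<inter> V'))) - real (m+1) / real n' * real (card (inN E v \<inter> V'))\<bar> < e17"
      using wbA S2 by blast
    show ?thesis using a1 a2 unfolding eq1 eq2 by blast
  qed
  have part2: "real (card (outN E v \<inter> V'')) \<ge> (1/2 + (eps' - 2 * c)) * real (n' - m) \<and>
               real (card (inN E v \<inter> V'')) \<ge> (1/2 + (eps' - 2 * c)) * real (n' - m)" if "v \<in> V" for v
  proof -
    have gen: "real (card (Nb \<inter> V'')) \<ge> (1/2 + (eps' - 2 * c)) * real (n' - m)"
      if k: "real (card (Nb \<inter> V')) \<ge> (1/2 + eps') * real n'"
      and X: "\<bar>real (card (Nb \<inter> V' \<inter> VQ)) - real (m + 1) / real n' * real (card (Nb \<inter> V'))\<bar> < e17" for Nb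
    proof -
      have finA: "finite (Nb \<inter> V')" using finV' by simp
      have "(Nb \<inter> V') - VQ \<subseteq> Nb \<inter> V''" unfolding V''_def by auto
      moreover have "finite (Nb \<inter> V'')" unfolding V''_def using finV' by simp
      ultimately have "card ((Nb \<inter> V') - VQ) \<le> card (Nb \<inter> V'')" by (intro card_mono)
      moreover have "card ((Nb \<inter> V') - VQ) = card (Nb \<inter> V') - card (Nb \<inter> V' \<inter> VQ)"
        using card_Diff_subset_Int[of "Nb \<inter> V'" VQ] finA by simp
      moreover have "card (Nb \<inter> V' \<inter> VQ) \<le> card (Nb \<inter> V')" using finA by (intro card_mono) auto
      ultimately have cge: "real (card (Nb \<inter> V'')) \<ge> real (card (Nb \<inter> V')) - real (card (Nb \<inter> V' \<inter> VQ))"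
        by linarith
      have Xle: "real (card (Nb \<inter> V' \<inter> VQ)) \<le> (real m + 1) / real n' * real (card (Nb \<inter> V')) + e17"
      proof -
        have "real (card (Nb \<inter> V' \<inter> VQ)) \<le> real (m + 1) / real n' * real (card (Nb \<inter> V')) + e17"
          using X by (simp only: abs_less_iff) linarith
        moreover have "real (m + 1) = real m + 1" by simp
        ultimately show ?thesis by (simp only:)
      qed
      have "real (card (Nb \<inter> V')) - real (card (Nb \<inter> V' \<inter> VQ)) \<ge> (1/2+(eps'-2*c))*(real n' - real m)"
        using part2_num[OF k _ _ npos Xle _ mhalf eps(1) eps(2)] mle asy xdef cc ee by auto
      moreover have "real (n' - m) = real n' - real m" using mle by simp
      ultimately show ?thesis using cge by simp
    qed
    show ?thesis using gen p5 part1[OF that] that by blast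
  qed
  have V''V: "V'' \<subseteq> V" unfolding V''_def using p2 p14 by auto
  have part3: "eps_digraph (n' - m) (eps' - 2 * c) V'' (induced E V'')"
  proof -
    have "finite V''" using finV V''V finite_subset by blast
    moreover have "induced E V'' \<subseteq> V'' \<times> V''" unfolding induced_def by auto
    moreover have "(v,v) \<notin> induced E V''" for v using dig unfolding digraph_def induced_def by auto
    ultimately have dg: "digraph V'' (induced E V'')" unfolding digraph_def by simp
    have "card V'' = card (V' - VQ) + 1" unfolding V''_def using p14 finV' by simp
    also have "card (V' - VQ) = n' - (m+1)" using card_Diff_subset[OF finVQ p7] p3 p9 by simp
    finally have cV: "card V'' = n' - m" using mle by simp
    have "outN (induced E V'') v = outN E v \<inter> V''" "inN (induced E V'') v = inN E v \<inter> V''" if "v \<in> V''" for v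
      using that unfolding outN_def inN_def induced_def by auto
    thus ?thesis unfolding eps_digraph_def using dg cV part2 V''V by auto
  qed
  have part4': "b_normal b V' (induced E V') x' \<longrightarrow>
              (\<exists>x''. perfect_frac_matching V'' (induced E V'') x'' \<and>
                 b_normal ((1 + \<delta>) * b) V'' (induced E V'') x'' \<and>
                 entropy (induced E V'') x'' \<ge> real (n' - m) / real n' * entropy (induced E V') x'
                   - real (n' - m) * log 2 (real n' / real (n' - m)) - S)"
  proof
    assume bn: "b_normal b V' (induced E V') x'"
    have wbb: "\<forall>v\<in>V'.
         \<bar>(\<Sum>w\<in>outN (induced E V') v \<inter> VQ. x' (v, w)) - real (m+1) / real n'\<bar> < c \<and>
         \<bar>(\<Sum>w\<in>outN (induced E V') v \<inter> VQ. x' (v, w) * log 2 (1 / x' (v, w)))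
            - real (m+1) / real n' * hplus (induced E V') x' v\<bar> < c \<and>
         \<bar>(\<Sum>w\<in>inN (induced E V') v \<inter> VQ. x' (w, v)) - real (m+1) / real n'\<bar> < c \<and>
         \<bar>(\<Sum>w\<in>inN (induced E V') v \<inter> VQ. x' (w, v) * log 2 (1 / x' (w, v)))
            - real (m+1) / real n' * hminus (induced E V') x' v\<bar> < c"
      using wb unfolding c_def by blast
    have lb: "log 2 (b * real n') \<le> 4 * ln x" "0 \<le> log 2 (b * real n')"
      using log_bound[of b x] b2 asy xdef by auto
    have hS: "6*log 2 (b*real n') + 4*real n'*c + 4 + real n'*\<delta>*(log 2 (b*real n')+4) \<le> S"
    proof -
      have a5: "24 * ln (real n') + 4*real n'*c + 4 + real n'*\<delta>*(4 * ln (real n') + 4) \<le> S"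
        using asy unfolding xdef cc dd ss by blast
      have l1: "log 2 (b*real n') \<le> 4 * ln (real n')" using lb(1) unfolding xdef .
      have d0: "0 \<le> \<delta>" using asy dd by simp
      have m1: "real n'*\<delta>*(log 2 (b*real n')+4) \<le> real n'*\<delta>*(4 * ln (real n') + 4)"
        using l1 d0 npos by (intro mult_left_mono) auto
      show ?thesis using a5 l1 m1 by linarith
    qed
    have degb: "\<forall>v\<in>V. real (card (outN E v \<inter> ((V' - VQ) \<union> {u}))) \<ge> (1/2 + (eps' - 2*c)) * real (n' - m) \<and>
                    real (card (inN E v \<inter> ((V' - VQ) \<union> {u}))) \<ge> (1/2 + (eps' - 2*c)) * real (n' - m)"
      using part2 unfolding V''_def by blast
    show "\<exists>x''. perfect_frac_matching V'' (induced E V'') x'' \<and>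
                 b_normal ((1 + \<delta>) * b) V'' (induced E V'') x'' \<and>
                 entropy (induced E V'') x'' \<ge> real (n' - m) / real n' * entropy (induced E V') x'
                   - real (n' - m) * log 2 (real n' / real (n' - m)) - S"
      unfolding V''_def
      by (rule part4[OF dig p2 p3 p4 bn p7 p9 p14 wbb degb n4 msq])
         (use asy cc dd xdef eps b2 hS in auto)
  qed
  show ?thesis using part1 part2 part3 part4' unfolding c_def \<delta>_def S_def e17_def V''_def
    by (auto intro: less_imp_le)
qed

lemma ev_nat:
  fixes eps' b :: real
  assumes "eps' > 0" "b > 0"
  obtains N0 :: nat where "\<And>k. N0 \<le> k \<Longrightarrow> (\<lambda>x. 4 \<le> x \<and> (3*exp(sqrt(ln x)/1000) * x powr (1/4))^2 \<le> x \<and>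
     cF x \<le> eps'/8 \<and> 0 < cF x \<and> 4 \<le> eps' * x \<and> 16*b*(6/x + 2*cF x) \<le> eps' * dF x \<and>
     0 < dF x \<and> dF x \<le> 1 \<and>
     24 * ln x + 4*x*cF x + 4 + x*dF x*(4 * ln x + 4) \<le> sF x \<and>
     3/2 + eF x \<le> cF x * x \<and> 2*b \<le> x \<and> b \<le> x \<and> 1 < x) (real k)"
proof -
  have "eventually (\<lambda>x. 4 \<le> x \<and> (3*exp(sqrt(ln x)/1000) * x powr (1/4))^2 \<le> x \<and>
     cF x \<le> eps'/8 \<and> 0 < cF x \<and> 4 \<le> eps' * x \<and> 16*b*(6/x + 2*cF x) \<le> eps' * dF x \<and>
     0 < dF x \<and> dF x \<le> 1 \<and>
     24 * ln x + 4*x*cF x + 4 + x*dF x*(4 * ln x + 4) \<le> sF x \<and>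
     3/2 + eF x \<le> cF x * x \<and> 2*b \<le> x \<and> b \<le> x \<and> 1 < x) at_top" by (rule asymp_conds[OF assms])
  hence "eventually (\<lambda>k. (\<lambda>x. 4 \<le> x \<and> (3*exp(sqrt(ln x)/1000) * x powr (1/4))^2 \<le> x \<and>
     cF x \<le> eps'/8 \<and> 0 < cF x \<and> 4 \<le> eps' * x \<and> 16*b*(6/x + 2*cF x) \<le> eps' * dF x \<and>
     0 < dF x \<and> dF x \<le> 1 \<and>
     24 * ln x + 4*x*cF x + 4 + x*dF x*(4 * ln x + 4) \<le> sF x \<and>
     3/2 + eF x \<le> cF x * x \<and> 2*b \<le> x \<and> b \<le> x \<and> 1 < x) (real k)) sequentially"
    by (rule eventually_compose_filterlim[OF _ filterlim_real_sequentially])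
  thus ?thesis using that unfolding eventually_sequentially by blast
qed

theorem lemma6p4:
  shows "\<forall>\<epsilon> \<epsilon>'::real. 0 < \<epsilon> \<and> \<epsilon> \<le> 1 \<and> 0 < \<epsilon>' \<and> \<epsilon>' \<le> 1 \<longrightarrow>
    (\<exists>b0::real. \<forall>b\<ge>b0. \<exists>\<gamma>0::real. \<gamma>0 > 0 \<and>
      (\<forall>\<gamma>. 0 < \<gamma> \<and> \<gamma> \<le> \<gamma>0 \<longrightarrow>
        (\<exists>N0::nat. \<forall>n n'. N0 \<le> n \<and> N0 \<le> n' \<longrightarrow>
          (\<forall>(V::nat set) E V' x' VQ EQ (m::nat) u.
            let D = exp (\<gamma> * sqrt (ln (real n')));
                E' = induced E V';
                n'' = n' - m;
                \<epsilon>'' = \<epsilon>' - 2 * real n' powr (- 3/4 - 1 / (18 * sqrt (ln (real n'))));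
                V'' = (V' - VQ) \<union> {u};
                E'' = induced E V''
            in
            eps_digraph n \<epsilon> V E \<and>
            V' \<subseteq> V \<and> card V' = n' \<and>
            perfect_frac_matching V' E' x' \<and>
            (\<forall>v\<in>V. real (card (outN E v \<inter> V')) \<ge> (1/2 + \<epsilon>') * real n' \<and>
                    real (card (inN E v \<inter> V')) \<ge> (1/2 + \<epsilon>') * real n') \<and>
            oriented_tree VQ EQ \<and> VQ \<subseteq> V' \<and> EQ \<subseteq> E' \<and>
            card VQ = m + 1 \<and>
            real n' powr (1/4) + 1 \<le> real (card VQ) \<and>
            real (card VQ) \<le> 3 * D * real n' powr (1/4) \<and>
            (\<forall>q\<in>VQ. real (und_degree EQ q) \<le> D) \<and>
            well_behaved V E V' x' VQ \<and>
            u \<in> V - V'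
            \<longrightarrow>
            (\<forall>v\<in>V.
               \<bar>real (card (outN E v \<inter> V' \<inter> VQ))
                 - real (m + 1) / real n' * real (card (outN E v \<inter> V'))\<bar>
                 \<le> real n' powr (1/4 - 1 / (17 * sqrt (ln (real n')))) \<and>
               \<bar>real (card (inN E v \<inter> V' \<inter> VQ))
                 - real (m + 1) / real n' * real (card (inN E v \<inter> V'))\<bar>
                 \<le> real n' powr (1/4 - 1 / (17 * sqrt (ln (real n'))))) \<and>
            (\<forall>v\<in>V. real (card (outN E v \<inter> V'')) \<ge> (1/2 + \<epsilon>'') * real n'' \<and>
                    real (card (inN E v \<inter> V'')) \<ge> (1/2 + \<epsilon>'') * real n'') \<and>
            eps_digraph n'' \<epsilon>'' V'' E'' \<and>
            (b_normal b V' E' x' \<longrightarrow>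
              (\<exists>x''. perfect_frac_matching V'' E'' x'' \<and>
                 b_normal ((1 + real n' powr (- 3/4 - 1 / (22 * sqrt (ln (real n'))))) * b)
                   V'' E'' x'' \<and>
                 entropy E'' x'' \<ge> real n'' / real n' * entropy E' x'
                   - real n'' * log 2 (real n' / real n'')
                   - real n' powr (1/4 - 1 / (24 * sqrt (ln (real n'))))))))))"

proof (intro allI impI)
  fix eps eps' :: real
  assume h: "0 < eps \<and> eps \<le> 1 \<and> 0 < eps' \<and> eps' \<le> 1"
  hence e1: "0 < eps'" and e2: "eps' \<le> 1" by auto
  show "\<exists>b0::real. \<forall>b\<ge>b0. \<exists>\<gamma>0::real. \<gamma>0 > 0 \<and>
      (\<forall>\<gamma>. 0 < \<gamma> \<and> \<gamma> \<le> \<gamma>0 \<longrightarrow>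
        (\<exists>N0::nat. \<forall>n n'. N0 \<le> n \<and> N0 \<le> n' \<longrightarrow>
          (\<forall>(V::nat set) E V' x' VQ EQ (m::nat) u.
            let D = exp (\<gamma> * sqrt (ln (real n')));
                E' = induced E V';
                n'' = n' - m;
                \<epsilon>'' = eps' - 2 * real n' powr (- 3/4 - 1 / (18 * sqrt (ln (real n'))));
                V'' = (V' - VQ) \<union> {u};
                E'' = induced E V''
            in
            eps_digraph n eps V E \<and>
            V' \<subseteq> V \<and> card V' = n' \<and>
            perfect_frac_matching V' E' x' \<and>
            (\<forall>v\<in>V. real (card (outN E v \<inter> V')) \<ge> (1/2 + eps') * real n' \<and>
                    real (card (inN E v \<inter> V')) \<ge> (1/2 + eps') * real n') \<and>
            oriented_tree VQ EQ \<and> VQ \<subseteq> V' \<and> EQ \<subseteq> E' \<and>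
            card VQ = m + 1 \<and>
            real n' powr (1/4) + 1 \<le> real (card VQ) \<and>
            real (card VQ) \<le> 3 * D * real n' powr (1/4) \<and>
            (\<forall>q\<in>VQ. real (und_degree EQ q) \<le> D) \<and>
            well_behaved V E V' x' VQ \<and>
            u \<in> V - V'
            \<longrightarrow>
            (\<forall>v\<in>V.
               \<bar>real (card (outN E v \<inter> V' \<inter> VQ))
                 - real (m + 1) / real n' * real (card (outN E v \<inter> V'))\<bar>
                 \<le> real n' powr (1/4 - 1 / (17 * sqrt (ln (real n')))) \<and>
               \<bar>real (card (inN E v \<inter> V' \<inter> VQ))
                 - real (m + 1) / real n' * real (card (inN E v \<inter> V'))\<bar>
                 \<le> real n' powr (1/4 - 1 / (17 * sqrt (ln (real n'))))) \<and>
            (\<forall>v\<in>V. real (card (outN E v \<inter> V'')) \<ge> (1/2 + \<epsilon>'') * real n'' \<and>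
                    real (card (inN E v \<inter> V'')) \<ge> (1/2 + \<epsilon>'') * real n'') \<and>
            eps_digraph n'' \<epsilon>'' V'' E'' \<and>
            (b_normal b V' E' x' \<longrightarrow>
              (\<exists>x''. perfect_frac_matching V'' E'' x'' \<and>
                 b_normal ((1 + real n' powr (- 3/4 - 1 / (22 * sqrt (ln (real n'))))) * b)
                   V'' E'' x'' \<and>
                 entropy E'' x'' \<ge> real n'' / real n' * entropy E' x'
                   - real n'' * log 2 (real n' / real n'')
                   - real n' powr (1/4 - 1 / (24 * sqrt (ln (real n')))))))))"
  proof (rule exI[of _ 2], intro allI impI)
    fix b :: real assume b2: "2 \<le> b"
    show "\<exists>\<gamma>0::real. \<gamma>0 > 0 \<and>
      (\<forall>\<gamma>. 0 < \<gamma> \<and> \<gamma> \<le> \<gamma>0 \<longrightarrow>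
        (\<exists>N0::nat. \<forall>n n'. N0 \<le> n \<and> N0 \<le> n' \<longrightarrow>
          (\<forall>(V::nat set) E V' x' VQ EQ (m::nat) u.
            let D = exp (\<gamma> * sqrt (ln (real n')));
                E' = induced E V';
                n'' = n' - m;
                \<epsilon>'' = eps' - 2 * real n' powr (- 3/4 - 1 / (18 * sqrt (ln (real n'))));
                V'' = (V' - VQ) \<union> {u};
                E'' = induced E V''
            in
            eps_digraph n eps V E \<and>
            V' \<subseteq> V \<and> card V' = n' \<and>
            perfect_frac_matching V' E' x' \<and>
            (\<forall>v\<in>V. real (card (outN E v \<inter> V')) \<ge> (1/2 + eps') * real n' \<and>
                    real (card (inN E v \<inter> V')) \<ge> (1/2 + eps') * real n') \<and>
            oriented_tree VQ EQ \<and> VQ \<subseteq> V' \<and> EQ \<subseteq> E' \<and>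
            card VQ = m + 1 \<and>
            real n' powr (1/4) + 1 \<le> real (card VQ) \<and>
            real (card VQ) \<le> 3 * D * real n' powr (1/4) \<and>
            (\<forall>q\<in>VQ. real (und_degree EQ q) \<le> D) \<and>
            well_behaved V E V' x' VQ \<and>
            u \<in> V - V'
            \<longrightarrow>
            (\<forall>v\<in>V.
               \<bar>real (card (outN E v \<inter> V' \<inter> VQ))
                 - real (m + 1) / real n' * real (card (outN E v \<inter> V'))\<bar>
                 \<le> real n' powr (1/4 - 1 / (17 * sqrt (ln (real n')))) \<and>
               \<bar>real (card (inN E v \<inter> V' \<inter> VQ))
                 - real (m + 1) / real n' * real (card (inN E v \<inter> V'))\<bar>
                 \<le> real n' powr (1/4 - 1 / (17 * sqrt (ln (real n'))))) \<and>
            (\<forall>v\<in>V. real (card (outN E v \<inter> V'')) \<ge> (1/2 + \<epsilon>'') * real n'' \<and>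
                    real (card (inN E v \<inter> V'')) \<ge> (1/2 + \<epsilon>'') * real n'') \<and>
            eps_digraph n'' \<epsilon>'' V'' E'' \<and>
            (b_normal b V' E' x' \<longrightarrow>
              (\<exists>x''. perfect_frac_matching V'' E'' x'' \<and>
                 b_normal ((1 + real n' powr (- 3/4 - 1 / (22 * sqrt (ln (real n'))))) * b)
                   V'' E'' x'' \<and>
                 entropy E'' x'' \<ge> real n'' / real n' * entropy E' x'
                   - real n'' * log 2 (real n' / real n'')
                   - real n' powr (1/4 - 1 / (24 * sqrt (ln (real n')))))))))"
    proof (intro exI[of _ "1/1000"] conjI allI impI)
      show "(1/1000::real) > 0" by simp
      fix \<gamma> :: real assume g: "0 < \<gamma> \<and> \<gamma> \<le> 1/1000"
      hence g1: "0 < \<gamma>" and g2: "\<gamma> \<le> 1/1000" by auto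
      have bpos: "b > 0" using b2 by simp
      obtain N0 :: nat where N0: "\<And>k. N0 \<le> k \<Longrightarrow> (\<lambda>x. 4 \<le> x \<and> (3*exp(sqrt(ln x)/1000) * x powr (1/4))^2 \<le> x \<and>
     cF x \<le> eps'/8 \<and> 0 < cF x \<and> 4 \<le> eps' * x \<and> 16*b*(6/x + 2*cF x) \<le> eps' * dF x \<and>
     0 < dF x \<and> dF x \<le> 1 \<and>
     24 * ln x + 4*x*cF x + 4 + x*dF x*(4 * ln x + 4) \<le> sF x \<and>
     3/2 + eF x \<le> cF x * x \<and> 2*b \<le> x \<and> b \<le> x \<and> 1 < x) (real k)"
        using ev_nat[OF e1 bpos] by blast
      show "\<exists>N0::nat. \<forall>n n'. N0 \<le> n \<and> N0 \<le> n' \<longrightarrow>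
          (\<forall>(V::nat set) E V' x' VQ EQ (m::nat) u.
            let D = exp (\<gamma> * sqrt (ln (real n')));
                E' = induced E V';
                n'' = n' - m;
                \<epsilon>'' = eps' - 2 * real n' powr (- 3/4 - 1 / (18 * sqrt (ln (real n'))));
                V'' = (V' - VQ) \<union> {u};
                E'' = induced E V''
            in
            eps_digraph n eps V E \<and>
            V' \<subseteq> V \<and> card V' = n' \<and>
            perfect_frac_matching V' E' x' \<and>
            (\<forall>v\<in>V. real (card (outN E v \<inter> V')) \<ge> (1/2 + eps') * real n' \<and>
                    real (card (inN E v \<inter> V')) \<ge> (1/2 + eps') * real n') \<and>
            oriented_tree VQ EQ \<and> VQ \<subseteq> V' \<and> EQ \<subseteq> E' \<and>
            card VQ = m + 1 \<and>
            real n' powr (1/4) + 1 \<le> real (card VQ) \<and>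
            real (card VQ) \<le> 3 * D * real n' powr (1/4) \<and>
            (\<forall>q\<in>VQ. real (und_degree EQ q) \<le> D) \<and>
            well_behaved V E V' x' VQ \<and>
            u \<in> V - V'
            \<longrightarrow>
            (\<forall>v\<in>V.
               \<bar>real (card (outN E v \<inter> V' \<inter> VQ))
                 - real (m + 1) / real n' * real (card (outN E v \<inter> V'))\<bar>
                 \<le> real n' powr (1/4 - 1 / (17 * sqrt (ln (real n')))) \<and>
               \<bar>real (card (inN E v \<inter> V' \<inter> VQ))
                 - real (m + 1) / real n' * real (card (inN E v \<inter> V'))\<bar>
                 \<le> real n' powr (1/4 - 1 / (17 * sqrt (ln (real n'))))) \<and>
            (\<forall>v\<in>V. real (card (outN E v \<inter> V'')) \<ge> (1/2 + \<epsilon>'') * real n'' \<and>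
                    real (card (inN E v \<inter> V'')) \<ge> (1/2 + \<epsilon>'') * real n'') \<and>
            eps_digraph n'' \<epsilon>'' V'' E'' \<and>
            (b_normal b V' E' x' \<longrightarrow>
              (\<exists>x''. perfect_frac_matching V'' E'' x'' \<and>
                 b_normal ((1 + real n' powr (- 3/4 - 1 / (22 * sqrt (ln (real n'))))) * b)
                   V'' E'' x'' \<and>
                 entropy E'' x'' \<ge> real n'' / real n' * entropy E' x'
                   - real n'' * log 2 (real n' / real n'')
                   - real n' powr (1/4 - 1 / (24 * sqrt (ln (real n')))))))"
        apply (intro exI[of _ N0] allI impI)
        subgoal premises prems for n n' V E V' x' VQ EQ m u
        proof -
          have A: "(\<lambda>x. 4 \<le> x \<and> (3*exp(sqrt(ln x)/1000) * x powr (1/4))^2 \<le> x \<and>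
     cF x \<le> eps'/8 \<and> 0 < cF x \<and> 4 \<le> eps' * x \<and> 16*b*(6/x + 2*cF x) \<le> eps' * dF x \<and>
     0 < dF x \<and> dF x \<le> 1 \<and>
     24 * ln x + 4*x*cF x + 4 + x*dF x*(4 * ln x + 4) \<le> sF x \<and>
     3/2 + eF x \<le> cF x * x \<and> 2*b \<le> x \<and> b \<le> x \<and> 1 < x) (real n')" using N0 prems by blast
          note mc = main_core[OF e1 e2 b2 g1 g2 A refl, of n eps V E V' x' VQ m u]
          show ?thesis unfolding Let_def
            by (intro impI, elim conjE) (rule mc; assumption)
        qed
        done
    qed
  qed
qed


end
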